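(* Fix $i\in\{1,\dots,N\}$, $\phi>0$ and $\boldsymbol{\theta}\in\mathbb{R}^m$, and assume that the map $(t,\boldsymbol{\theta}')\mapsto g(t,\mathbf{x}_i;\boldsymbol{\theta}')$ is continuous on $[0,y_i]\times\mathbb{R}^m$. Let $\omega_i\sim\mathrm{PG}(1,0)$ and, independently, let $\Psi_i$ be a marked Poisson process on $[0,y_i]\times\mathbb{R}_+$ with intensity $\lambda_i(t,\omega;\phi)=\lambda_0(t,\mathbf{x}_i;\phi)\,p_{\mathrm{PG}}(\omega\mid 1,0)$; denote its law by $\mathbb{P}_{\Psi_i\mid\phi}$. Then $$p(y_i,\delta_i\mid \mathbf{x}_i,\phi,g(\cdot;\boldsymbol{\theta}))=\mathbb{E}_{\omega_i\sim \mathrm{PG}(1,0),\,\Psi_i\sim\mathbb{P}_{\Psi_i\mid\phi}}\big[p(y_i,\delta_i\mid \mathbf{x}_i,\phi,g(\cdot;\boldsymbol{\theta}),\omega_i,\Psi_i)\big],$$ where the likelihood is $$p(y_i,\delta_i\mid \mathbf{x}_i,\phi,g(\cdot;\boldsymbol{\theta}))=\big(\lambda_0(y_i,\mathbf{x}_i;\phi)\,\sigma(g(y_i,\mathbf{x}_i;\boldsymbol{\theta}))\big)^{\delta_i}\exp\Big(-\int_0^{y_i}\lambda_0(t,\mathbf{x}_i;\phi)\,\sigma(g(t,\mathbf{x}_i;\boldsymbol{\theta}))\,dt\Big)$$ and the augmented likelihood is $$p(y_i,\delta_i\mid \mathbf{x}_i,\phi,g(\cdot;\boldsymbol{\theta}),\omega_i,\Psi_i)=\big(\lambda_0(y_i,\mathbf{x}_i;\phi)\,e^{f(\omega_i,g(y_i,\mathbf{x}_i;\boldsymbol{\theta}))}\big)^{\delta_i}\prod_{(t_j,\omega_j)\in\Psi_i}e^{f(\omega_j,-g(t_j,\mathbf{x}_i;\boldsymbol{\theta}))},$$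 with the empty product equal to $1$.
   Context: Data: $N$ observations with observed times $y_i>0$, censoring indicators $\delta_i\in\{0,1\}$ and covariates $\mathbf{x}_i\in\mathbb{R}^p$. $g:\mathbb{R}_+\times\mathbb{R}^p\times\mathbb{R}^m\to\mathbb{R}$, $(t,\mathbf{x},\boldsymbol{\theta})\mapsto g(t,\mathbf{x};\boldsymbol{\theta})$, is a given function (a neural network). $\sigma(z)=1/(1+e^{-z})$. $p_{\boldsymbol{\theta}}$ is the density of $\mathcal{N}(\mathbf{0},\mathbf{I}_m)$ on $\mathbb{R}^m$. The normalizing function is $Z(t,\mathbf{x})=\int_{\mathbb{R}^m}\sigma(g(t,\mathbf{x};\boldsymbol{\theta}))\,p_{\boldsymbol{\theta}}(\boldsymbol{\theta})\,d\boldsymbol{\theta}$. For a fixed $\rho>0$ and $\phi>0$, $\lambda_0(t;\phi)=\phi\,t^{\rho-1}$ and $\lambda_0(t,\mathbf{x};\phi)=\lambda_0(t;\phi)/Z(t,\mathbf{x})$. $f(\omega,z)=\frac{z}{2}-\frac{z^2}{2}\omega-\log 2$. A random variable $\omega$ has the Pólya–Gamma distribution $\mathrm{PG}(b,c)$ ($b>0$, $c\in\mathbb{R}$) if $\omega\overset{d}{=}\frac{1}{2\pi^2}\sum_{k=1}^\infty \frac{g_k}{(k-1/2)^2+c^2/(4\pi^2)}$ with $g_k$ i.i.d. $\mathrm{Gamma}(b,1)$; $p_{\mathrm{PG}}(\omega\mid b,c)$ denotes its density on $\mathbb{R}_+$. A marked Poisson process on $[0,y]\times\mathbb{R}_+$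 with intensity $\lambda(t,\omega)$ is a Poisson point process on that product space with that intensity function. *)

theory Defs
  imports "HOL-Probability.Probability"
begin

definition sigmoid :: "real \<Rightarrow> real" where
  "sigmoid z = 1 / (1 + exp (- z))"

definition std_gauss_density :: "real ^ 'm::finite \<Rightarrow> real" where
  "std_gauss_density \<theta> = (\<Prod>k\<in>UNIV. std_normal_density (\<theta> $ k))"

definition Zfun :: "(real \<Rightarrow> real ^ 'p::finite \<Rightarrow> real ^ 'm::finite \<Rightarrow> real) \<Rightarrow> real \<Rightarrow> real ^ 'p \<Rightarrow> real" where
  "Zfun g t x = (\<integral>\<theta>. sigmoid (g t x \<theta>) * std_gauss_density \<theta> \<partial>lborel)"

definition base_hazard :: "real \<Rightarrow> real \<Rightarrow> real \<Rightarrow> real" where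
  "base_hazard \<rho> t \<phi> = \<phi> * t powr (\<rho> - 1)"

definition cov_hazard :: "(real \<Rightarrow> real ^ 'p::finite \<Rightarrow> real ^ 'm::finite \<Rightarrow> real) \<Rightarrow> real \<Rightarrow> real \<Rightarrow> real ^ 'p \<Rightarrow> real \<Rightarrow> real" where
  "cov_hazard g \<rho> t x \<phi> = base_hazard \<rho> t \<phi> / Zfun g t x"

definition fPG :: "real \<Rightarrow> real \<Rightarrow> real" where
  "fPG \<omega> z = z / 2 - z\<^sup>2 / 2 * \<omega> - ln 2"

definition gamma_dist :: "real \<Rightarrow> real measure" where
  "gamma_dist b = density lborel (\<lambda>x. ennreal (if x \<le> 0 then 0 else x powr (b - 1) * exp (- x) / Gamma b))"

text \<open>Polya-Gamma distribution PG(b,c): law of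
  1/(2 pi^2) * sum_{k>=1} g_k / ((k-1/2)^2 + c^2/(4 pi^2)) with g_k iid Gamma(b,1).
  (Index k here runs over nat starting at 0, i.e. k+1 in the paper's indexing.)\<close>
definition PG :: "real \<Rightarrow> real \<Rightarrow> real measure" where
  "PG b c = distr (PiM (UNIV :: nat set) (\<lambda>_. gamma_dist b)) borel
     (\<lambda>gs. 1 / (2 * pi\<^sup>2) * (\<Sum>k. gs k / ((real k + 1 / 2)\<^sup>2 + c\<^sup>2 / (4 * pi\<^sup>2))))"

definition PG_density :: "real \<Rightarrow> real \<Rightarrow> real \<Rightarrow> ennreal" where
  "PG_density b c \<omega> = RN_deriv lborel (PG b c) \<omega>"

text \<open>Law of a Poisson point process with finite intensity measure mu on a space S:
  N ~ Poisson(mu(S)) and, independently, iid points with law mu/mu(S).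
  A realisation is a pair (n, pts); the points of the process are pts 0, ..., pts (n-1).\<close>
definition poisson_process :: "'a measure \<Rightarrow> (nat \<times> (nat \<Rightarrow> 'a)) measure" where
  "poisson_process \<mu> =
     measure_pmf (poisson_pmf (measure \<mu> (space \<mu>)))
     \<Otimes>\<^sub>M PiM (UNIV :: nat set) (\<lambda>_. scale_measure (inverse (emeasure \<mu> (space \<mu>))) \<mu>)"

definition marked_intensity :: "(real \<Rightarrow> real ^ 'p::finite \<Rightarrow> real ^ 'm::finite \<Rightarrow> real) \<Rightarrow> real \<Rightarrow> real \<Rightarrow> real ^ 'p \<Rightarrow> real \<Rightarrow> (real \<times> real) measure" where
  "marked_intensity g \<rho> y x \<phi> =
     density (restrict_space lborel ({0..y} \<times> {0..}))
       (\<lambda>(t, \<omega>). ennreal (cov_hazard g \<rho> t x \<phi>) * PG_density 1 0 \<omega>)"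

definition likelihood :: "(real \<Rightarrow> real ^ 'p::finite \<Rightarrow> real ^ 'm::finite \<Rightarrow> real) \<Rightarrow> real \<Rightarrow> real \<Rightarrow> nat \<Rightarrow> real ^ 'p \<Rightarrow> real \<Rightarrow> real ^ 'm \<Rightarrow> real" where
  "likelihood g \<rho> y \<delta> x \<phi> \<theta> =
     (cov_hazard g \<rho> y x \<phi> * sigmoid (g y x \<theta>)) ^ \<delta>
     * exp (- (LINT t:{0..y}|lborel. cov_hazard g \<rho> t x \<phi> * sigmoid (g t x \<theta>)))"

definition aug_likelihood :: "(real \<Rightarrow> real ^ 'p::finite \<Rightarrow> real ^ 'm::finite \<Rightarrow> real) \<Rightarrow> real \<Rightarrow> real \<Rightarrow> nat \<Rightarrow> real ^ 'p \<Rightarrow> real \<Rightarrow> real ^ 'm \<Rightarrow> real \<Rightarrow> nat \<times> (nat \<Rightarrow> real \<times> real) \<Rightarrow> real" where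
  "aug_likelihood g \<rho> y \<delta> x \<phi> \<theta> \<omega> \<Psi> =
     (cov_hazard g \<rho> y x \<phi> * exp (fPG \<omega> (g y x \<theta>))) ^ \<delta>
     * (\<Prod>j<fst \<Psi>. exp (fPG (snd (snd \<Psi> j)) (- g (fst (snd \<Psi> j)) x \<theta>)))"

end

theory Submission
  imports Defs "HOL-Analysis.Analysis" "HOL-Probability.Probability"
begin

lemma prod_split_even_odd:
  fixes f :: "nat \<Rightarrow> 'a::comm_monoid_mult"
  shows "(\<Prod>k=1..2*n. f k) = (\<Prod>j=1..n. f (2*j)) * (\<Prod>j<n. f (2*j+1))"
proof (induction n)
  case 0 then show ?case by simp
next
  case (Suc n)
  have e: "{1..2 * Suc n} = insert (2*n+2) (insert (2*n+1) {1..2*n})" by auto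
  have "(\<Prod>k=1..2*Suc n. f k) = f (2*n+2) * (f (2*n+1) * (\<Prod>k=1..2*n. f k))"
    unfolding e by (subst prod.insert; simp)+
  also have "\<dots> = (\<Prod>j=1..Suc n. f (2*j)) * (\<Prod>j<Suc n. f (2*j+1))"
    using Suc by (simp add: ac_simps)
  finally show ?case .
qed

lemma cos_product_complex:
  fixes z :: complex
  assumes nz: "sin (of_real pi * z) \<noteq> 0"
  shows "(\<lambda>n. \<Prod>k<n. 1 - z^2 / (of_nat k + 1/2)^2) \<longlonglongrightarrow> cos (of_real pi * z)"
proof -
  define P where "P = (\<lambda>z n. of_real pi * z * (\<Prod>k=1..n. 1 - z^2 / (of_nat k:: complex)^2))"
  define Q where "Q = (\<lambda>n. \<Prod>k<n. 1 - z^2 / (of_nat k + 1/2 :: complex)^2)"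
  have id: "P (2*z) (2*n) = 2 * P z n * Q n" for n
  proof -
    have "(\<Prod>k=1..2*n. 1 - (2*z)^2 / (of_nat k:: complex)^2)
       = (\<Prod>j=1..n. 1 - (2*z)^2 / (of_nat (2*j):: complex)^2) * (\<Prod>j<n. 1 - (2*z)^2 / (of_nat (2*j+1):: complex)^2)"
      by (rule prod_split_even_odd)
    also have "(\<Prod>j=1..n. 1 - (2*z)^2 / (of_nat (2*j):: complex)^2) = (\<Prod>j=1..n. 1 - z^2 / (of_nat j:: complex)^2)"
      by (intro prod.cong refl) (simp add: power2_eq_square)
    also have "(\<Prod>j<n. 1 - (2*z)^2 / (of_nat (2*j+1):: complex)^2) = Q n"
      unfolding Q_def
    proof (intro prod.cong refl)
      fix j
      have "(of_nat (2*j+1) :: complex) = 2 * (of_nat j + 1/2)" by simp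
      then show "1 - (2*z)^2 / (of_nat (2*j+1):: complex)^2 = 1 - z^2 / (of_nat j + 1/2 :: complex)^2"
        by (simp only: \<open>(of_nat (2*j+1) :: complex) = 2 * (of_nat j + 1/2)\<close> power_mult_distrib) simp
    qed
    finally show ?thesis unfolding P_def by (simp add: ac_simps)
  qed
  have L1: "(\<lambda>n. P (2*z) (2*n)) \<longlonglongrightarrow> sin (of_real pi * (2*z))"
  proof -
    have "(\<lambda>n. P (2*z) n) \<longlonglongrightarrow> sin (of_real pi * (2*z))"
      unfolding P_def by (rule sin_product_formula_complex)
    moreover have "filterlim (\<lambda>n::nat. 2*n) sequentially sequentially"
      by (rule filterlim_subseq) (auto simp: strict_mono_def)
    ultimately show ?thesis by (rule filterlim_compose)
  qed
  have L2: "(\<lambda>n. P z n) \<longlonglongrightarrow> sin (of_real pi * z)"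
    unfolding P_def by (rule sin_product_formula_complex)
  have L3: "(\<lambda>n. P (2*z) (2*n) / (2 * P z n)) \<longlonglongrightarrow> sin (of_real pi * (2*z)) / (2 * sin (of_real pi * z))"
    using nz by (intro tendsto_intros L1 L2) auto
  have ev: "eventually (\<lambda>n. P z n \<noteq> 0) sequentially"
    using tendsto_imp_eventually_ne[OF L2 nz] .
  have "eventually (\<lambda>n. P (2*z) (2*n) / (2 * P z n) = Q n) sequentially"
    using ev by eventually_elim (simp add: id)
  with L3 have "Q \<longlonglongrightarrow> sin (of_real pi * (2*z)) / (2 * sin (of_real pi * z))"
    by (rule Lim_transform_eventually)
  also have "sin (of_real pi * (2*z)) / (2 * sin (of_real pi * z)) = cos (of_real pi * z)"
  proof -
    have "sin (of_real pi * (2*z)) = sin (2 * (of_real pi * z))" by (simp add: ac_simps)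
    also have "\<dots> = 2 * sin (of_real pi * z) * cos (of_real pi * z)" by (rule sin_double)
    finally show ?thesis using nz by simp
  qed
  finally show ?thesis unfolding Q_def .
qed

lemma cosh_product:
  fixes w :: real
  shows "(\<lambda>n. \<Prod>k<n. 1 + w^2 / (real k + 1/2)^2) \<longlonglongrightarrow> cosh (pi * w)"
proof (cases "w = 0")
  case True then show ?thesis by simp
next
  case False
  define z where "z = \<i> * complex_of_real w"
  have nz: "sin (of_real pi * z) \<noteq> 0"
  proof
    assume "sin (of_real pi * z) = 0"
    then obtain n :: int where "of_real pi * z = of_real (n * pi)" by (auto simp: sin_eq_0)
    then have "Im (of_real pi * z) = Im (of_real (n * pi))" by simp
    then show False using False by (simp add: z_def)
  qed
  from cos_product_complex[OF nz]
  have "(\<lambda>n. \<Prod>k<n. 1 - z^2 / (of_nat k + 1/2)^2) \<longlonglongrightarrow> cos (of_real pi * z)" .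
  also have "(\<lambda>n. \<Prod>k<n. 1 - z^2 / (of_nat k + 1/2)^2) = (\<lambda>n. complex_of_real (\<Prod>k<n. 1 + w^2 / (real k + 1/2)^2))"
    by (simp add: z_def power_mult_distrib)
  also have "cos (of_real pi * z) = complex_of_real (cosh (pi * w))"
    by (simp add: z_def cos_conv_cosh cosh_field_def exp_of_real[symmetric] ac_simps)
  finally show ?thesis by (simp only: tendsto_of_real_iff)
qed

lemma gamma1_eq: "gamma_dist 1 = density lborel (\<lambda>x. ennreal (if x \<le> 0 then 0 else exp (- x)))"
  unfolding gamma_dist_def by (intro density_cong) auto

lemma exp_laplace_lborel:
  fixes l :: real assumes l: "l > 0"
  shows "(\<integral>\<^sup>+ x. ennreal (if x \<le> 0 then 0 else exp (- (l * x))) \<partial>lborel) = ennreal (1 / l)"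
proof -
  interpret prob_space "density lborel (exponential_density l)"
    using prob_space_exponential_density[OF l] .
  have "1 = emeasure (density lborel (exponential_density l)) UNIV"
    using emeasure_space_1 by simp
  also have "\<dots> = (\<integral>\<^sup>+ x. ennreal (exponential_density l x) \<partial>lborel)"
    by (subst emeasure_density) auto
  also have "\<dots> = (\<integral>\<^sup>+ x. ennreal l * ennreal (if x \<le> 0 then 0 else exp (- (l * x))) \<partial>lborel)"
  proof (rule nn_integral_cong_AE)
    show "AE x in lborel. ennreal (exponential_density l x) = ennreal l * ennreal (if x \<le> 0 then 0 else exp (- (l * x)))"
      using AE_lborel_singleton[of "0::real"]
      by eventually_elim (use l in \<open>auto simp: exponential_density_def ennreal_mult'[symmetric] ac_simps\<close>)
  qed
  also have "\<dots> = ennreal l * (\<integral>\<^sup>+ x. ennreal (if x \<le> 0 then 0 else exp (- (l * x))) \<partial>lborel)"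
    by (rule nn_integral_cmult) auto
  finally have "ennreal l * (\<integral>\<^sup>+ x. ennreal (if x \<le> 0 then 0 else exp (- (l * x))) \<partial>lborel) = 1" by simp
  then have "(\<integral>\<^sup>+ x. ennreal (if x \<le> 0 then 0 else exp (- (l * x))) \<partial>lborel) = 1 / ennreal l"
    using l ennreal_mult_divide_eq[of "ennreal l" "(\<integral>\<^sup>+ x. ennreal (if x \<le> 0 then 0 else exp (- (l * x))) \<partial>lborel)"]
    by (simp add: mult.commute)
  then show ?thesis using l divide_ennreal[of 1 l] by simp
qed

lemma gamma1_laplace:
  fixes b :: real assumes b: "b > -1"
  shows "(\<integral>\<^sup>+ x. ennreal (exp (- (b * x))) \<partial>gamma_dist 1) = ennreal (1 / (1 + b))"
proof -
  have "(\<integral>\<^sup>+ x. ennreal (exp (- (b * x))) \<partial>gamma_dist 1)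
     = (\<integral>\<^sup>+ x. ennreal (if x \<le> 0 then 0 else exp (- x)) * ennreal (exp (- (b * x))) \<partial>lborel)"
    unfolding gamma1_eq by (subst nn_integral_density) auto
  also have "\<dots> = (\<integral>\<^sup>+ x. ennreal (if x \<le> 0 then 0 else exp (- ((1 + b) * x))) \<partial>lborel)"
    by (intro nn_integral_cong) (auto simp: ennreal_mult'[symmetric] exp_add[symmetric] algebra_simps)
  also have "\<dots> = ennreal (1 / (1 + b))"
    using b by (intro exp_laplace_lborel) auto
  finally show ?thesis .
qed

lemma gamma1_prob: "prob_space (gamma_dist 1)"
proof
  have "emeasure (gamma_dist 1) (space (gamma_dist 1)) = (\<integral>\<^sup>+ x. ennreal (exp (- (0 * x))) \<partial>gamma_dist 1)"
    by (subst nn_integral_cong[where v = "\<lambda>_. 1"]) auto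
  also have "\<dots> = 1" using gamma1_laplace[of 0] by simp
  finally show "emeasure (gamma_dist 1) (space (gamma_dist 1)) = 1" .
qed

lemma sets_gamma1[measurable_cong, simp]: "sets (gamma_dist 1) = sets borel"
  unfolding gamma1_eq by simp

lemma space_gamma1[simp]: "space (gamma_dist 1) = UNIV"
  unfolding gamma1_eq by simp

lemma gamma1_AE_pos: "AE x in gamma_dist 1. x > 0"
  unfolding gamma1_eq by (subst AE_density) (auto intro!: AE_I2)

lemma gamma1_mean_fin: "(\<integral>\<^sup>+ x. ennreal x \<partial>gamma_dist 1) < \<infinity>"
proof -
  have "(\<integral>\<^sup>+ x. ennreal x \<partial>gamma_dist 1) \<le> (\<integral>\<^sup>+ x. ennreal 2 * ennreal (exp (- ((-1/2) * x))) \<partial>gamma_dist 1)"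
  proof (rule nn_integral_mono)
    fix x :: real
    have "x / 2 \<le> exp (x / 2)" using exp_ge_add_one_self[of "x/2"] by linarith
    then have "x \<le> 2 * exp (x/2)" by linarith
    then have "x \<le> 2 * exp (- ((-1/2) * x))" by (simp add: ac_simps)
    then have "ennreal x \<le> ennreal (2 * exp (- ((-1/2) * x)))"
      by (rule ennreal_leI)
    then show "ennreal x \<le> ennreal 2 * ennreal (exp (- ((-1/2) * x)))"
      by (simp add: ennreal_mult)
  qed
  also have "\<dots> = ennreal 2 * ennreal (1 / (1 + (-1/2)))"
    using gamma1_laplace[of "-1/2"] by (subst nn_integral_cmult) auto
  also have "\<dots> < \<infinity>" by (simp add: ennreal_mult_less_top)
  finally show ?thesis .
qed

lemma gamma1_le_lborel:
  assumes [measurable]: "f \<in> borel_measurable borel"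
  shows "(\<integral>\<^sup>+ x. f x \<partial>gamma_dist 1) \<le> (\<integral>\<^sup>+ x. f x \<partial>lborel)"
proof -
  have "(\<integral>\<^sup>+ x. f x \<partial>density lborel (\<lambda>x. ennreal (if x \<le> 0 then 0 else exp (- x))))
     = (\<integral>\<^sup>+ x. ennreal (if x \<le> 0 then 0 else exp (- x)) * f x \<partial>lborel)"
    by (rule nn_integral_density) auto
  also have "\<dots> \<le> (\<integral>\<^sup>+ x. f x \<partial>lborel)"
  proof (intro nn_integral_mono)
  fix x :: real
  have "ennreal (if x \<le> 0 then 0 else exp (- x)) * f x \<le> 1 * f x"
    by (intro mult_right_mono) (auto simp: ennreal_le_1)
  then show "ennreal (if x \<le> 0 then 0 else exp (- x)) * f x \<le> f x" by simp
  qed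
  finally have "(\<integral>\<^sup>+ x. f x \<partial>density lborel (\<lambda>x. ennreal (if x \<le> 0 then 0 else exp (- x)))) \<le> (\<integral>\<^sup>+ x. f x \<partial>lborel)" .
  then show ?thesis by (simp add: gamma1_eq)
qed

abbreviation GS :: "(nat \<Rightarrow> real) measure" where "GS \<equiv> PiM UNIV (\<lambda>_::nat. gamma_dist 1)"

definition S0 :: "(nat \<Rightarrow> real) \<Rightarrow> real" where
  "S0 gs = 1 / (2 * pi\<^sup>2) * (\<Sum>k. gs k / (real k + 1 / 2)\<^sup>2)"

lemma PG10_eq: "PG 1 0 = distr GS borel S0"
  unfolding PG_def S0_def by simp

lemma S0_meas[measurable]: "S0 \<in> borel_measurable GS"
  unfolding S0_def by measurable

lemma PiM_nat_prod:
  fixes M :: "'a measure" and h :: "nat \<Rightarrow> 'a \<Rightarrow> ennreal"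
  assumes P: "prob_space M" and [measurable]: "\<And>k. h k \<in> borel_measurable M"
  shows "(\<integral>\<^sup>+\<omega>. (\<Prod>k<n. h k (\<omega> k)) \<partial>PiM UNIV (\<lambda>_::nat. M)) = (\<Prod>k<n. \<integral>\<^sup>+x. h k x \<partial>M)"
proof -
  interpret product_prob_space "\<lambda>_::nat. M" UNIV
    using P by (auto simp: product_prob_space_def product_prob_space_axioms_def product_sigma_finite_def
        prob_space_imp_sigma_finite)
  have "(\<integral>\<^sup>+\<omega>. (\<Prod>k<n. h k (\<omega> k)) \<partial>PiM UNIV (\<lambda>_::nat. M))
      = (\<integral>\<^sup>+\<omega>. (\<Prod>k\<in>{..<n}. h k (restrict \<omega> {..<n} k)) \<partial>PiM UNIV (\<lambda>_::nat. M))"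
    by (intro nn_integral_cong) simp
  also have "\<dots> = (\<integral>\<^sup>+x. (\<Prod>k\<in>{..<n}. h k (x k)) \<partial>distr (PiM UNIV (\<lambda>_::nat. M)) (PiM {..<n} (\<lambda>_. M)) (\<lambda>\<omega>. restrict \<omega> {..<n}))"
    by (subst nn_integral_distr) auto
  also have "\<dots> = (\<integral>\<^sup>+x. (\<Prod>k\<in>{..<n}. h k (x k)) \<partial>PiM {..<n} (\<lambda>_. M))"
    by (subst distr_PiM_restrict_finite) auto
  also have "\<dots> = (\<Prod>k<n. \<integral>\<^sup>+x. h k x \<partial>M)"
    by (rule product_nn_integral_prod) auto
  finally show ?thesis .
qed

lemma GS_prob: "prob_space GS"
  by (intro prob_space_PiM gamma1_prob)

lemma GS_component: "(\<integral>\<^sup>+gs. f (gs k) \<partial>GS) = (\<integral>\<^sup>+x. f x \<partial>gamma_dist 1)"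
  if [measurable]: "f \<in> borel_measurable borel"
proof -
  have "(\<integral>\<^sup>+gs. f (gs k) \<partial>GS) = (\<integral>\<^sup>+x. f x \<partial>distr GS (gamma_dist 1) (\<lambda>\<omega>. \<omega> k))"
    by (subst nn_integral_distr) auto
  also have "\<dots> = (\<integral>\<^sup>+x. f x \<partial>gamma_dist 1)"
    by (subst distr_PiM_component) (auto intro: gamma1_prob)
  finally show ?thesis .
qed

lemma summable_c: "summable (\<lambda>k. 1 / (real k + 1/2)^2)"
proof -
  have s1: "summable (\<lambda>n. inverse (real n ^ 2))"
    by (rule inverse_power_summable) simp
  then have s2: "summable (\<lambda>n. 4 * inverse (real (Suc n) ^ 2))"
    by (subst summable_Suc_iff) (rule summable_mult)
  show ?thesis
  proof (rule summable_comparison_test[OF _ s2], intro exI allI impI)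
    fix n :: nat
    have "(real n + 1)^2 \<le> 4 * (real n + 1/2)^2"
      by (simp add: power2_eq_square algebra_simps)
    then show "norm (1 / (real n + 1/2)^2) \<le> 4 * inverse (real (Suc n) ^ 2)"
      by (simp add: field_simps)
  qed
qed

lemma AE_GS: "AE gs in GS. (\<forall>k. 0 < gs k) \<and> summable (\<lambda>k. gs k / (real k + 1/2)^2)"
proof -
  have pos: "AE gs in GS. \<forall>k. 0 < gs k"
    by (subst AE_all_countable) (intro allI AE_PiM_component gamma1_prob gamma1_AE_pos, auto)
  have "(\<integral>\<^sup>+gs. (\<Sum>k. ennreal (gs k / (real k + 1/2)^2)) \<partial>GS)
     = (\<Sum>k. \<integral>\<^sup>+gs. ennreal (gs k / (real k + 1/2)^2) \<partial>GS)"
    by (rule nn_integral_suminf) measurable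
  also have "\<dots> = (\<Sum>k. ennreal (1 / (real k + 1/2)^2) * (\<integral>\<^sup>+x. ennreal x \<partial>gamma_dist 1))"
  proof (intro suminf_cong)
    fix k
    have "(\<integral>\<^sup>+gs. ennreal (gs k / (real k + 1/2)^2) \<partial>GS) = (\<integral>\<^sup>+x. ennreal (x / (real k + 1/2)^2) \<partial>gamma_dist 1)"
      by (rule GS_component) measurable
    also have "\<dots> = (\<integral>\<^sup>+x. ennreal (1 / (real k + 1/2)^2) * ennreal x \<partial>gamma_dist 1)"
      by (intro nn_integral_cong) (simp add: ennreal_mult'[symmetric])
    also have "\<dots> = ennreal (1 / (real k + 1/2)^2) * (\<integral>\<^sup>+x. ennreal x \<partial>gamma_dist 1)"
      by (rule nn_integral_cmult) measurable
    finally show "(\<integral>\<^sup>+gs. ennreal (gs k / (real k + 1/2)^2) \<partial>GS) = \<dots>" .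
  qed
  also have "\<dots> = ennreal (\<Sum>k. 1 / (real k + 1/2)^2) * (\<integral>\<^sup>+x. ennreal x \<partial>gamma_dist 1)"
    by (simp add: suminf_ennreal2 summable_c)
  also have "\<dots> < \<infinity>"
    using gamma1_mean_fin by (simp add: ennreal_mult_less_top)
  finally have fin: "(\<integral>\<^sup>+gs. (\<Sum>k. ennreal (gs k / (real k + 1/2)^2)) \<partial>GS) \<noteq> \<infinity>" by simp
  have "AE gs in GS. (\<Sum>k. ennreal (gs k / (real k + 1/2)^2)) \<noteq> \<infinity>"
    by (rule nn_integral_PInf_AE[OF _ fin]) measurable
  with pos show ?thesis
  proof eventually_elim
    case (elim gs)
    then have "summable (\<lambda>k. gs k / (real k + 1/2)^2)"
      by (intro summable_suminf_not_top) (auto intro: less_imp_le)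
    with elim show ?case by simp
  qed
qed

lemma S0_series:
  assumes "summable (\<lambda>k. gs k / (real k + 1/2)^2)"
  shows "(\<lambda>n. \<Sum>k<n. ((z/(2*pi))^2 / (real k + 1/2)^2) * gs k) \<longlonglongrightarrow> z^2/2 * S0 gs"
proof -
  have s: "summable (\<lambda>k. (z/(2*pi))^2 * (gs k / (real k + 1/2)^2))"
    using assms by (rule summable_mult)
  have "(\<lambda>k. ((z/(2*pi))^2 / (real k + 1/2)^2) * gs k) = (\<lambda>k. (z/(2*pi))^2 * (gs k / (real k + 1/2)^2))"
    by auto
  moreover have "(\<Sum>k. (z/(2*pi))^2 * (gs k / (real k + 1/2)^2)) = z^2/2 * S0 gs"
  proof -
    have "(\<Sum>k. (z/(2*pi))^2 * (gs k / (real k + 1/2)^2)) = (z/(2*pi))^2 * (\<Sum>k. gs k / (real k + 1/2)^2)"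
      by (rule suminf_mult[OF assms])
    moreover have "(z/(2*pi))^2 = z^2/2 * (1 / (2 * pi\<^sup>2))"
      by (simp add: power_divide power_mult_distrib)
    ultimately show ?thesis unfolding S0_def by simp
  qed
  ultimately show ?thesis using summable_LIMSEQ[OF s] by (simp only:)
qed

lemma PG_laplace: "(\<integral>\<^sup>+\<omega>. ennreal (exp (-(z^2/2 * \<omega>))) \<partial>PG 1 0) = ennreal (1 / cosh (z/2))"
proof -
  interpret GSP: prob_space GS by (rule GS_prob)
  define b where "b k = (z/(2*pi))^2 / (real k + 1/2)^2" for k
  have b_nn: "0 \<le> b k" for k unfolding b_def by simp
  define u where "u n gs = (\<Prod>k<n. ennreal (exp (- (b k * gs k))))" for n gs
  have u_meas[measurable]: "u n \<in> borel_measurable GS" for n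
    unfolding u_def by measurable
  have lhs: "(\<integral>\<^sup>+\<omega>. ennreal (exp (-(z^2/2 * \<omega>))) \<partial>PG 1 0) = (\<integral>\<^sup>+gs. ennreal (exp (-(z^2/2 * S0 gs))) \<partial>GS)"
    unfolding PG10_eq by (subst nn_integral_distr) auto
  have int_u: "(\<integral>\<^sup>+gs. u n gs \<partial>GS) = ennreal (1 / (\<Prod>k<n. 1 + b k))" for n
  proof -
    have "(\<integral>\<^sup>+gs. u n gs \<partial>GS) = (\<Prod>k<n. \<integral>\<^sup>+x. ennreal (exp (- (b k * x))) \<partial>gamma_dist 1)"
      unfolding u_def by (rule PiM_nat_prod[OF gamma1_prob]) measurable
    also have "\<dots> = (\<Prod>k<n. ennreal (1 / (1 + b k)))"
      using b_nn by (intro prod.cong refl gamma1_laplace) (auto intro: less_le_trans[of _ 0])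
    also have "\<dots> = ennreal (\<Prod>k<n. 1 / (1 + b k))"
      using b_nn by (subst prod_ennreal) (auto intro!: divide_nonneg_nonneg add_nonneg_nonneg)
    also have "(\<Prod>k<n. 1 / (1 + b k)) = 1 / (\<Prod>k<n. 1 + b k)"
      by (simp add: prod_dividef)
    finally show ?thesis .
  qed
  have lim1: "(\<lambda>n. \<integral>\<^sup>+gs. u n gs \<partial>GS) \<longlonglongrightarrow> (\<integral>\<^sup>+gs. ennreal (exp (-(z^2/2 * S0 gs))) \<partial>GS)"
  proof (rule nn_integral_dominated_convergence[where w = "\<lambda>_. 1"])
    show "AE x in GS. u j x \<le> 1" for j
      using AE_GS
    proof eventually_elim
      case (elim gs)
      have "u j gs = ennreal (\<Prod>k<j. exp (- (b k * gs k)))"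
        unfolding u_def by (subst prod_ennreal) auto
      also have "\<dots> \<le> ennreal 1"
        using elim b_nn by (intro ennreal_leI prod_le_1) (auto intro: mult_nonneg_nonneg less_imp_le)
      finally show ?case by simp
    qed
    show "(\<integral>\<^sup>+x. 1 \<partial>GS) < \<infinity>" using GSP.emeasure_space_1 by simp
    show "AE x in GS. (\<lambda>i. u i x) \<longlonglongrightarrow> ennreal (exp (-(z^2/2 * S0 x)))"
      using AE_GS
    proof eventually_elim
      case (elim gs)
      have "(\<lambda>n. \<Sum>k<n. b k * gs k) \<longlonglongrightarrow> z^2/2 * S0 gs"
        unfolding b_def using elim by (intro S0_series) auto
      then have "(\<lambda>n. ennreal (exp (- (\<Sum>k<n. b k * gs k)))) \<longlonglongrightarrow> ennreal (exp (-(z^2/2 * S0 gs)))"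
        by (intro tendsto_ennrealI tendsto_intros)
      moreover have "u n gs = ennreal (exp (- (\<Sum>k<n. b k * gs k)))" for n
        unfolding u_def by (subst prod_ennreal) (auto simp: exp_sum[symmetric] sum_negf)
      ultimately show ?case by simp
    qed
  qed measurable
  have lim2: "(\<lambda>n. ennreal (1 / (\<Prod>k<n. 1 + b k))) \<longlonglongrightarrow> ennreal (1 / cosh (z/2))"
  proof -
    have "(\<lambda>n. \<Prod>k<n. 1 + b k) \<longlonglongrightarrow> cosh (pi * (z/(2*pi)))"
      unfolding b_def by (rule cosh_product)
    also have "pi * (z/(2*pi)) = z/2" by simp
    finally have "(\<lambda>n. \<Prod>k<n. 1 + b k) \<longlonglongrightarrow> cosh (z/2)" .
    then show ?thesis
      by (intro tendsto_ennrealI tendsto_intros) (auto intro: order.strict_trans2[OF _ cosh_real_ge_1] )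
  qed
  from lim1 lim2 have "(\<integral>\<^sup>+gs. ennreal (exp (-(z^2/2 * S0 gs))) \<partial>GS) = ennreal (1 / cosh (z/2))"
    unfolding int_u by (rule LIMSEQ_unique)
  with lhs show ?thesis by simp
qed

lemma sigmoid_cosh: "exp (z/2) / 2 * (1 / cosh (z/2)) = sigmoid z"
proof -
  have e: "exp z = exp (z/2) * exp (z/2)" by (simp add: exp_add[symmetric])
  have "exp (z/2) / 2 * (1 / cosh (z/2)) = exp (z/2) / (exp (z/2) + exp (- (z/2)))"
    by (simp add: cosh_def)
  also have "\<dots> = 1 / (1 + exp (- z))"
    by (simp add: exp_minus e field_simps)
  finally show ?thesis by (simp add: sigmoid_def)
qed

lemma PG_fPG: "(\<integral>\<^sup>+\<omega>. ennreal (exp (fPG \<omega> z)) \<partial>PG 1 0) = ennreal (sigmoid z)"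
proof -
  have "(\<integral>\<^sup>+\<omega>. ennreal (exp (fPG \<omega> z)) \<partial>PG 1 0) = (\<integral>\<^sup>+\<omega>. ennreal (exp (z/2) / 2) * ennreal (exp (-(z^2/2 * \<omega>))) \<partial>PG 1 0)"
  proof (intro nn_integral_cong)
    fix \<omega> :: real
    have "fPG \<omega> z = z/2 + (-(z^2/2*\<omega>)) + (- ln 2)" by (simp add: fPG_def algebra_simps)
    then have "exp (fPG \<omega> z) = exp (z/2) * exp (-(z^2/2*\<omega>)) * exp (- ln 2)"
      by (simp only: exp_add)
    moreover have "exp (- ln 2) = (1/2::real)" by (simp add: exp_minus)
    ultimately have "exp (fPG \<omega> z) = exp (z/2) / 2 * exp (-(z^2/2 * \<omega>))" by simp
    then show "ennreal (exp (fPG \<omega> z)) = ennreal (exp (z/2) / 2) * ennreal (exp (-(z^2/2 * \<omega>)))"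
      by (simp add: ennreal_mult[symmetric])
  qed
  also have "\<dots> = ennreal (exp (z/2) / 2) * (\<integral>\<^sup>+\<omega>. ennreal (exp (-(z^2/2 * \<omega>))) \<partial>PG 1 0)"
    by (rule nn_integral_cmult) (simp add: PG10_eq)
  also have "\<dots> = ennreal (exp (z/2) / 2) * ennreal (1 / cosh (z/2))"
    by (simp only: PG_laplace)
  also have "\<dots> = ennreal (sigmoid z)"
  proof -
    have "0 < cosh (z/2)" using cosh_real_ge_1[of "z/2"] by linarith
    then show ?thesis
      by (subst ennreal_mult[symmetric]) (simp_all only: sigmoid_cosh, auto)
  qed
  finally show ?thesis .
qed

lemma PG_prob: "prob_space (PG 1 0)"
  unfolding PG10_eq by (intro prob_space.prob_space_distr GS_prob) measurable

lemma sets_PG[simp, measurable_cong]: "sets (PG 1 0) = sets borel"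
  unfolding PG10_eq by simp

lemma space_PG[simp]: "space (PG 1 0) = UNIV"
  unfolding PG10_eq by simp

lemma S0_nonneg: "(\<forall>k. 0 < gs k) \<Longrightarrow> summable (\<lambda>k. gs k / (real k + 1/2)^2) \<Longrightarrow> 0 \<le> S0 gs"
  unfolding S0_def by (intro mult_nonneg_nonneg suminf_nonneg) (auto intro: less_imp_le)

lemma PG_AE_nonneg: "AE \<omega> in PG 1 0. 0 \<le> \<omega>"
proof -
  have "AE gs in GS. 0 \<le> S0 gs"
    using AE_GS by eventually_elim (auto intro: S0_nonneg)
  then show ?thesis unfolding PG10_eq by (subst AE_distr_iff) auto
qed

lemma S0_case_nat:
  assumes pos: "\<forall>k. 0 < \<omega> k" and sm: "summable (\<lambda>k. \<omega> k / (real k + 1/2)^2)"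
  shows "S0 (case_nat s \<omega>) = 2 / pi^2 * s + 1 / (2 * pi\<^sup>2) * (\<Sum>k. \<omega> k / (real (Suc k) + 1/2)^2)"
proof -
  define f where "f k = case_nat s \<omega> k / (real k + 1/2)^2" for k
  have sS: "summable (\<lambda>k. f (Suc k))"
  proof (rule summable_comparison_test[OF _ sm], intro exI allI impI)
    fix k :: nat
    have "(real k + 1/2)^2 \<le> (real (Suc k) + 1/2)^2"
      by (intro power_mono) auto
    then show "norm (f (Suc k)) \<le> \<omega> k / (real k + 1/2)^2"
      using pos[rule_format, of k] unfolding f_def
      by (auto intro!: divide_left_mono mult_pos_pos simp: add_pos_pos)
  qed
  then have s: "summable f" by (simp add: summable_Suc_iff)
  have "suminf f = f 0 + (\<Sum>k. f (Suc k))"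
    using suminf_split_head[OF s] by simp
  moreover have "f 0 = 4 * s" unfolding f_def by (simp add: power2_eq_square)
  moreover have "(\<lambda>k. f (Suc k)) = (\<lambda>k. \<omega> k / (real (Suc k) + 1/2)^2)"
    unfolding f_def by simp
  ultimately have "suminf f = 4 * s + (\<Sum>k. \<omega> k / (real (Suc k) + 1/2)^2)" by simp
  then show ?thesis unfolding S0_def f_def[symmetric] by (simp add: field_simps power2_eq_square)
qed

lemma PG_ac: "absolutely_continuous lborel (PG 1 0)"
  unfolding absolutely_continuous_def
proof (intro subsetI)
  fix A :: "real set" assume A: "A \<in> null_sets lborel"
  then have A_sets[measurable]: "A \<in> sets borel" by auto
  interpret G: prob_space "gamma_dist 1" by (rule gamma1_prob)
  interpret GSP: prob_space GS by (rule GS_prob)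
  interpret S: sequence_space "gamma_dist 1"
    by (auto simp: sequence_space_def product_prob_space_def product_prob_space_axioms_def product_sigma_finite_def
        prob_space_imp_sigma_finite gamma1_prob)
  interpret P: pair_prob_space "gamma_dist 1" GS ..
  have "emeasure (PG 1 0) A = (\<integral>\<^sup>+x. indicator A x \<partial>PG 1 0)"
    by (simp add: nn_integral_indicator)
  also have "\<dots> = (\<integral>\<^sup>+gs. indicator A (S0 gs) \<partial>GS)"
    unfolding PG10_eq by (subst nn_integral_distr) auto
  also have "\<dots> = (\<integral>\<^sup>+gs. indicator A (S0 gs) \<partial>distr (gamma_dist 1 \<Otimes>\<^sub>M GS) GS (\<lambda>(s, \<omega>). case_nat s \<omega>))"
    by (simp only: S.PiM_iter)
  also have "\<dots> = (\<integral>\<^sup>+x. indicator A (S0 (case_prod case_nat x)) \<partial>(gamma_dist 1 \<Otimes>\<^sub>M GS))"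
    by (subst nn_integral_distr) (auto simp: split_beta')
  also have "\<dots> = (\<integral>\<^sup>+\<omega>. (\<integral>\<^sup>+s. indicator A (S0 (case_nat s \<omega>)) \<partial>gamma_dist 1) \<partial>GS)"
    by (subst P.nn_integral_snd[symmetric]) (auto simp: split_beta')
  also have "\<dots> = (\<integral>\<^sup>+\<omega>. 0 \<partial>GS)"
  proof (rule nn_integral_cong_AE)
    show "AE \<omega> in GS. (\<integral>\<^sup>+s. indicator A (S0 (case_nat s \<omega>)) \<partial>gamma_dist 1) = 0"
      using AE_GS
    proof eventually_elim
      case (elim \<omega>)
      define t where "t = 1 / (2 * pi\<^sup>2) * (\<Sum>k. \<omega> k / (real (Suc k) + 1/2)^2)"
      define c where "c = 2 / pi^2"
      have c: "c \<noteq> 0" unfolding c_def by simp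
      have "(\<integral>\<^sup>+s. indicator A (S0 (case_nat s \<omega>)) \<partial>gamma_dist 1) = (\<integral>\<^sup>+s. indicator A (t + c * s) \<partial>gamma_dist 1)"
        using elim by (intro nn_integral_cong) (simp add: S0_case_nat t_def c_def add.commute)
      also have "\<dots> \<le> (\<integral>\<^sup>+s. indicator A (t + c * s) \<partial>lborel)"
        by (rule gamma1_le_lborel) measurable
      also have "\<dots> = 0"
      proof (subst nn_integral_0_iff_AE)
        have "AE x in lborel. x \<notin> A" by (rule AE_not_in[OF A])
        moreover have pr: "Measurable.pred borel (\<lambda>x. x \<notin> A)" by measurable
        ultimately have "AE s in lborel. t + c * s \<notin> A"
          using AE_borel_affine[OF c pr] by blast
        then show "AE s in lborel. indicator A (t + c * s) = (0::ennreal)"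
          by eventually_elim simp
      qed measurable
      finally show ?case by simp
    qed
  qed
  also have "\<dots> = 0" by simp
  finally show "A \<in> null_sets (PG 1 0)"
    by (simp add: null_sets_def)
qed

lemma PG_density_int:
  assumes [measurable]: "f \<in> borel_measurable borel"
  shows "(\<integral>\<^sup>+x. f x \<partial>PG 1 0) = (\<integral>\<^sup>+x. PG_density 1 0 x * f x \<partial>lborel)"
  unfolding PG_density_def
  by (rule sigma_finite_measure.RN_deriv_nn_integral[OF sigma_finite_lborel PG_ac]) auto

lemma PG_density_meas[measurable]: "PG_density 1 0 \<in> borel_measurable borel"
proof -
  have "RN_deriv lborel (PG 1 0) \<in> borel_measurable lborel" by (rule borel_measurable_RN_deriv)
  then show ?thesis unfolding PG_density_def by simp
qed

lemma Basis_vec_axis: "(Basis :: (real^'m::finite) set) = (\<lambda>i. axis i 1) ` UNIV"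
  unfolding Basis_vec_def by auto

lemma inj_axis1: "inj (\<lambda>i::'m::finite. axis i (1::real))"
  by (auto intro!: injI simp: axis_eq_axis)

lemma std_gauss_eq: "std_gauss_density (\<theta> :: real^'m::finite) = (\<Prod>b\<in>Basis. std_normal_density (\<theta> \<bullet> b))"
  unfolding std_gauss_density_def Basis_vec_axis
  by (subst prod.reindex[OF inj_axis1]) (simp add: inner_axis)

lemma std_gauss_meas[measurable]: "(std_gauss_density :: real^'m::finite \<Rightarrow> real) \<in> borel_measurable borel"
  unfolding std_gauss_eq[abs_def] by measurable

lemma std_gauss_nonneg: "0 \<le> std_gauss_density \<theta>"
  unfolding std_gauss_density_def by (intro prod_nonneg) auto

lemma std_normal_nn: "(\<integral>\<^sup>+x. ennreal (std_normal_density x) \<partial>lborel) = 1"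
proof -
  interpret prob_space "density lborel (normal_density 0 1)" by (rule prob_space_normal_density) simp
  have "1 = emeasure (density lborel (normal_density 0 1)) UNIV" using emeasure_space_1 by simp
  also have "\<dots> = (\<integral>\<^sup>+x. ennreal (std_normal_density x) \<partial>lborel)"
    by (subst emeasure_density) auto
  finally show ?thesis by simp
qed

lemma gauss_nn: "(\<integral>\<^sup>+\<theta>. ennreal (std_gauss_density (\<theta> :: real^'m::finite)) \<partial>lborel) = 1"
proof -
  have "(\<integral>\<^sup>+\<theta>. ennreal (std_gauss_density (\<theta> :: real^'m::finite)) \<partial>lborel)
      = (\<integral>\<^sup>+\<theta>. (\<Prod>b\<in>Basis. ennreal (std_normal_density ((\<theta> :: real^'m) \<bullet> b))) \<partial>lborel)"
    by (intro nn_integral_cong) (simp add: std_gauss_eq prod_ennreal)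
  also have "\<dots> = (\<Prod>b\<in>(Basis :: (real^'m) set). (\<integral>\<^sup>+x. ennreal (std_normal_density x) \<partial>lborel))"
    by (rule nn_integral_lborel_prod) auto
  also have "\<dots> = 1" by (simp add: std_normal_nn)
  finally show ?thesis .
qed

lemma gauss_integrable: "integrable lborel (std_gauss_density :: real^'m::finite \<Rightarrow> real)"
  by (rule integrableI_nonneg) (auto simp: std_gauss_nonneg gauss_nn)

lemma gauss_integral: "(\<integral>\<theta>. std_gauss_density (\<theta> :: real^'m::finite) \<partial>lborel) = 1"
proof -
  have "ennreal (\<integral>\<theta>. std_gauss_density (\<theta> :: real^'m::finite) \<partial>lborel) = 1"
    using nn_integral_eq_integral[OF gauss_integrable[where 'm='m] AE_I2[OF std_gauss_nonneg]] gauss_nn[where 'm='m] by simp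
  then show ?thesis by simp
qed

definition clampg :: "(real \<Rightarrow> 'p \<Rightarrow> 'q \<Rightarrow> real) \<Rightarrow> 'p \<Rightarrow> real \<Rightarrow> real \<Rightarrow> 'q \<Rightarrow> real" where
  "clampg g x y t \<theta> = g (max 0 (min y t)) x \<theta>"

lemma clampg_eq: "t \<in> {0..y} \<Longrightarrow> clampg g x y t \<theta> = g t x \<theta>"
  unfolding clampg_def by simp

lemma clampg_cont:
  fixes g :: "real \<Rightarrow> 'p \<Rightarrow> 'q::topological_space \<Rightarrow> real"
  assumes y: "0 \<le> y" and cont: "continuous_on ({0..y} \<times> UNIV) (\<lambda>(t, \<theta>'). g t x \<theta>')"
  shows "continuous_on UNIV (\<lambda>p. clampg g x y (fst p) (snd p))"
proof -
  have "continuous_on UNIV (\<lambda>p. (\<lambda>(t, \<theta>'). g t x \<theta>') ((\<lambda>p. (max 0 (min y (fst p)), snd p)) p))"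
    by (rule continuous_on_compose2[OF cont]) (use y in \<open>auto intro!: continuous_intros\<close>)
  then show ?thesis by (simp add: clampg_def split_beta)
qed

lemma sigmoid_pos: "0 < sigmoid z"
  unfolding sigmoid_def by (simp add: add_pos_pos)

lemma sigmoid_le1: "sigmoid z \<le> 1"
proof -
  have "1 \<le> 1 + exp (-z)" using exp_gt_zero[of "-z"] by linarith
  then have "1 / (1 + exp (-z)) \<le> 1 / 1" by (intro divide_left_mono) (auto simp: add_pos_pos)
  then show ?thesis unfolding sigmoid_def by simp
qed

lemma sigmoid_mono: "a \<le> b \<Longrightarrow> sigmoid a \<le> sigmoid b"
  unfolding sigmoid_def by (intro divide_left_mono) (auto simp: add_pos_pos)

lemma sigmoid_cont: "continuous_on UNIV sigmoid"
  unfolding sigmoid_def[abs_def] by (intro continuous_intros) (smt (verit) exp_gt_zero)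

lemma sigmoid_meas[measurable]: "sigmoid \<in> borel_measurable borel"
  by (rule borel_measurable_continuous_onI[OF sigmoid_cont])

definition Zc :: "(real \<Rightarrow> 'p \<Rightarrow> real^'m::finite \<Rightarrow> real) \<Rightarrow> 'p \<Rightarrow> real \<Rightarrow> real \<Rightarrow> real" where
  "Zc g x y t = (\<integral>\<theta>. sigmoid (clampg g x y t \<theta>) * std_gauss_density \<theta> \<partial>lborel)"

lemma Z_eq_Zc: "t \<in> {0..y} \<Longrightarrow> Zfun g t x = Zc g x y t"
  unfolding Zfun_def Zc_def by (simp add: clampg_eq)

context
  fixes g :: "real \<Rightarrow> real^'p::finite \<Rightarrow> real^'m::finite \<Rightarrow> real" and x :: "real^'p" and y :: real
  assumes y: "0 < y" and cont: "continuous_on ({0..y} \<times> UNIV) (\<lambda>(t, \<theta>'). g t x \<theta>')"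
begin

lemma clampg_cont': "continuous_on UNIV (\<lambda>p. clampg g x y (fst p) (snd p))"
  by (rule clampg_cont) (use y cont in auto)

lemma clampg_meas_pair: "(\<lambda>p. clampg g x y (fst p) (snd p)) \<in> borel_measurable (borel \<Otimes>\<^sub>M (lborel :: (real^'m) measure))"
proof -
  have "(\<lambda>p. clampg g x y (fst p) (snd p)) \<in> borel_measurable (borel :: (real \<times> (real^'m)) measure)"
    using clampg_cont' by (rule borel_measurable_continuous_onI)
  moreover have "sets (borel \<Otimes>\<^sub>M (lborel :: (real^'m) measure)) = sets (borel :: (real \<times> (real^'m)) measure)"
    by (simp add: borel_prod[symmetric] cong: sets_pair_measure_cong)
  ultimately show ?thesis by (simp cong: measurable_cong_sets)
qed

lemma clampg_meas_snd[measurable]: "clampg g x y t \<in> borel_measurable (borel :: (real^'m) measure)"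
proof -
  have "continuous_on UNIV (\<lambda>\<theta>. (\<lambda>p. clampg g x y (fst p) (snd p)) (t, \<theta>))"
    by (rule continuous_on_compose2[OF clampg_cont']) (auto intro!: continuous_intros)
  then show ?thesis by (simp add: borel_measurable_continuous_onI)
qed

lemma Zc_meas[measurable]: "Zc g x y \<in> borel_measurable borel"
proof -
  have "(\<lambda>p. sigmoid (clampg g x y (fst p) (snd p)) * std_gauss_density (snd p)) \<in> borel_measurable (borel \<Otimes>\<^sub>M (lborel :: (real^'m) measure))"
    using clampg_meas_pair by measurable
  then have "(\<lambda>t. \<integral>\<theta>. sigmoid (clampg g x y t \<theta>) * std_gauss_density \<theta> \<partial>lborel) \<in> borel_measurable borel"
    by (intro lborel.borel_measurable_lebesgue_integral) (simp add: split_beta')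
  then show ?thesis unfolding Zc_def[abs_def] .
qed

lemma Zc_integrable: "integrable lborel (\<lambda>\<theta>. sigmoid (clampg g x y t \<theta>) * std_gauss_density \<theta>)"
  by (rule Bochner_Integration.integrable_bound[OF gauss_integrable])
     (auto simp: abs_mult std_gauss_nonneg sigmoid_pos less_imp_le intro!: mult_left_le_one_le sigmoid_le1)

lemma Zc_le1: "Zc g x y t \<le> 1"
proof -
  have "Zc g x y t \<le> (\<integral>\<theta>. std_gauss_density (\<theta>::real^'m) \<partial>lborel)"
    unfolding Zc_def by (intro integral_mono Zc_integrable gauss_integrable)
      (auto simp: std_gauss_nonneg intro!: mult_left_le_one_le sigmoid_le1 less_imp_le[OF sigmoid_pos])
  then show ?thesis by (simp add: gauss_integral)
qed

lemma Zc_lower: "\<exists>c>0. \<forall>t\<in>{0..y}. c \<le> Zc g x y t"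
proof -
  define K :: "(real^'m) set" where "K = cbox (vec (-1)) (vec 1)"
  have "compact ((\<lambda>p. clampg g x y (fst p) (snd p)) ` ({0..y} \<times> K))"
    by (rule compact_continuous_image[OF continuous_on_subset[OF clampg_cont']])
       (auto simp: K_def intro: compact_Times)
  then have "bounded ((\<lambda>p. clampg g x y (fst p) (snd p)) ` ({0..y} \<times> K))" by (rule compact_imp_bounded)
  then obtain B where "\<forall>z\<in>(\<lambda>p. clampg g x y (fst p) (snd p)) ` ({0..y} \<times> K). \<bar>z\<bar> \<le> B"
    by (auto simp: bounded_real)
  then have B: "\<And>t \<theta>. t \<in> {0..y} \<Longrightarrow> \<theta> \<in> K \<Longrightarrow> \<bar>clampg g x y t \<theta>\<bar> \<le> B"
    by force
  define d where "d = std_normal_density 1 ^ CARD('m)"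
  have d: "0 < d" unfolding d_def by (simp add: normal_density_pos)
  have phiK: "d \<le> std_gauss_density \<theta>" if "\<theta> \<in> K" for \<theta>
  proof -
    have le1: "std_normal_density 1 \<le> std_normal_density (\<theta> $ k)" for k
    proof -
      have "-1 \<le> \<theta> $ k \<and> \<theta> $ k \<le> 1" using that by (auto simp: K_def mem_box_cart)
      then have "\<bar>\<theta> $ k\<bar> \<le> 1" by (simp add: abs_le_iff)
      then have "(\<theta> $ k)^2 \<le> 1^2" by (rule power2_le_iff_abs_le[THEN iffD2, rotated]) simp
      then have "(\<theta> $ k)^2 \<le> 1" by simp
      then have "exp (- (1 / 2)) \<le> exp (- ((\<theta> $ k)\<^sup>2 / 2))" by simp
      then show ?thesis by (simp add: std_normal_density_def divide_right_mono)
    qed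
    have "(\<Prod>k\<in>(UNIV::'m set). std_normal_density 1) \<le> (\<Prod>k\<in>UNIV. std_normal_density (\<theta> $ k))"
      by (rule prod_mono) (simp add: le1)
    then show ?thesis unfolding d_def std_gauss_density_def by simp
  qed
  have mK: "0 < measure lborel K"
  proof -
    have "(0::real^'m) \<in> cbox (vec (-1)) (vec 1)" by (simp add: mem_box_cart)
    then have "cbox (vec (-1)) (vec 1) \<noteq> ({} :: (real^'m) set)" by blast
    then have "measure lborel K = (\<Prod>i\<in>(UNIV::'m set). (2::real))"
      unfolding K_def by (simp add: content_cbox_cart)
    then show ?thesis by simp
  qed
  have eK: "emeasure lborel K < \<infinity>" unfolding K_def using emeasure_lborel_cbox_finite by (simp add: top_unique)
  have K_sets[measurable]: "K \<in> sets borel" unfolding K_def by simp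
  define c where "c = sigmoid (- B) * d * measure lborel K"
  have "0 < c" unfolding c_def using d mK sigmoid_pos by simp
  moreover have "c \<le> Zc g x y t" if t: "t \<in> {0..y}" for t
  proof -
    have "c = (\<integral>\<theta>. indicator K \<theta> * (sigmoid (- B) * d) \<partial>lborel)"
      unfolding c_def by simp
    also have "\<dots> \<le> Zc g x y t"
      unfolding Zc_def
    proof (intro integral_mono Zc_integrable integrable_mult_left integrable_real_indicator)
      fix \<theta> :: "real^'m"
      show "indicator K \<theta> * (sigmoid (- B) * d) \<le> sigmoid (clampg g x y t \<theta>) * std_gauss_density \<theta>"
      proof (cases "\<theta> \<in> K")
        case True
        have "sigmoid (- B) \<le> sigmoid (clampg g x y t \<theta>)"
          using B[OF t True] by (intro sigmoid_mono) simp
        then show ?thesis using True phiK[OF True] d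
          by (simp add: mult_mono less_imp_le[OF sigmoid_pos])
      next
        case False
        then show ?thesis by (simp add: std_gauss_nonneg less_imp_le[OF sigmoid_pos])
      qed
    qed (use eK in auto)
    finally show ?thesis .
  qed
  ultimately show ?thesis by blast
qed

end

lemma poisson_functional:
  fixes \<mu> :: "'a measure" and H :: "'a \<Rightarrow> ennreal" and M I :: real
  assumes M: "emeasure \<mu> (space \<mu>) = ennreal M" "0 < M"
    and H[measurable]: "H \<in> borel_measurable \<mu>" and I: "(\<integral>\<^sup>+x. H x \<partial>\<mu>) = ennreal I" "0 \<le> I"
  shows "(\<integral>\<^sup>+\<Psi>. (\<Prod>j<fst \<Psi>. H (snd \<Psi> j)) \<partial>poisson_process \<mu>) = ennreal (exp (I - M))"
proof -
  define \<nu> where "\<nu> = scale_measure (inverse (emeasure \<mu> (space \<mu>))) \<mu>"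
  have mM: "measure \<mu> (space \<mu>) = M" using M by (simp add: measure_def)
  have inv: "inverse (emeasure \<mu> (space \<mu>)) = ennreal (1 / M)"
    using M by (simp add: inverse_ennreal inverse_eq_divide)
  have \<nu>P: "prob_space \<nu>"
  proof
    have "emeasure \<nu> (space \<nu>) = ennreal (1/M) * ennreal M"
      unfolding \<nu>_def using M inv by (simp add: space_scale_measure)
    also have "\<dots> = 1" using M by (simp add: ennreal_mult[symmetric])
    finally show "emeasure \<nu> (space \<nu>) = 1" .
  qed
  interpret PP: prob_space "PiM UNIV (\<lambda>_::nat. \<nu>)"
    by (intro prob_space_PiM \<nu>P)
  have Hn[measurable]: "H \<in> borel_measurable \<nu>" unfolding \<nu>_def by simp
  have int\<nu>: "(\<integral>\<^sup>+x. H x \<partial>\<nu>) = ennreal (I / M)"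
  proof -
    have "(\<integral>\<^sup>+x. H x \<partial>\<nu>) = ennreal (1/M) * ennreal I"
      unfolding \<nu>_def using I by (simp add: nn_integral_scale_measure inv)
    also have "\<dots> = ennreal (I / M)" using M I by (simp add: ennreal_mult[symmetric])
    finally show ?thesis .
  qed
  define PM where "PM = PiM UNIV (\<lambda>_::nat. \<nu>)"
  have pp: "poisson_process \<mu> = measure_pmf (poisson_pmf M) \<Otimes>\<^sub>M PM"
    unfolding poisson_process_def PM_def \<nu>_def mM ..
  have meas: "(\<lambda>\<Psi>. \<Prod>j<fst \<Psi>. H (snd \<Psi> j)) \<in> borel_measurable (measure_pmf (poisson_pmf M) \<Otimes>\<^sub>M PM)"
  proof (rule measurable_compose_countable[where f = "\<lambda>n \<Psi>. \<Prod>j<n. H (snd \<Psi> j)" and g = fst])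
    show "fst \<in> measurable (measure_pmf (poisson_pmf M) \<Otimes>\<^sub>M PM) (count_space UNIV)"
      by (rule measurable_fst'') simp
  qed (unfold PM_def, measurable)
  have "(\<integral>\<^sup>+\<Psi>. (\<Prod>j<fst \<Psi>. H (snd \<Psi> j)) \<partial>poisson_process \<mu>)
      = (\<integral>\<^sup>+n. (\<integral>\<^sup>+pts. (\<Prod>j<n. H (pts j)) \<partial>PM) \<partial>measure_pmf (poisson_pmf M))"
    unfolding pp PM_def using PP.nn_integral_fst[OF meas[unfolded PM_def]] by simp
  also have "\<dots> = (\<integral>\<^sup>+n. ennreal (I / M) ^ n \<partial>measure_pmf (poisson_pmf M))"
    unfolding PM_def by (subst PiM_nat_prod[OF \<nu>P]) (auto simp: int\<nu>)
  also have "\<dots> = (\<Sum>n. ennreal (pmf (poisson_pmf M) n) * ennreal (I / M) ^ n)"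
    by (simp add: nn_integral_measure_pmf nn_integral_count_space_nat)
  also have "\<dots> = (\<Sum>n. ennreal (exp (- M) * (I ^ n / fact n)))"
  proof (intro suminf_cong)
    fix n
    have "ennreal (pmf (poisson_pmf M) n) * ennreal (I / M) ^ n
        = ennreal (M ^ n / fact n * exp (- M) * (I / M) ^ n)"
      using M I by (subst ennreal_mult) (auto simp: ennreal_power)
    also have "M ^ n / fact n * exp (- M) * (I / M) ^ n = exp (- M) * (I ^ n / fact n)"
      using M by (simp add: power_divide field_simps)
    finally show "ennreal (pmf (poisson_pmf M) n) * ennreal (I / M) ^ n = ennreal (exp (- M) * (I ^ n / fact n))" .
  qed
  also have "\<dots> = ennreal (exp (- M) * exp I)"
  proof -
    have "(\<lambda>n. I ^ n / fact n) sums exp I"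
      using exp_converges[of I] by (simp add: divide_inverse ac_simps scaleR_conv_of_real)
    then have s: "(\<lambda>n. exp (- M) * (I ^ n / fact n)) sums (exp (- M) * exp I)"
      by (rule sums_mult)
    have sm: "summable (\<lambda>n. exp (- M) * (I ^ n / fact n))" by (rule sums_summable[OF s])
    have eq: "(\<Sum>n. exp (- M) * (I ^ n / fact n)) = exp (- M) * exp I" by (rule sums_unique[OF s, symmetric])
    have "(\<Sum>n. ennreal (exp (- M) * (I ^ n / fact n))) = ennreal (\<Sum>n. exp (- M) * (I ^ n / fact n))"
      by (rule suminf_ennreal2) (use I sm in auto)
    then show ?thesis by (simp only: eq)
  qed
  also have "exp (- M) * exp I = exp (I - M)" by (simp add: exp_diff exp_minus field_simps)
  finally show ?thesis .
qed

lemma poisson_process_prob: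
  fixes \<mu> :: "'a measure" and M :: real
  assumes M: "emeasure \<mu> (space \<mu>) = ennreal M" "0 < M"
  shows "prob_space (poisson_process \<mu>)"
proof -
  define \<nu> where "\<nu> = scale_measure (inverse (emeasure \<mu> (space \<mu>))) \<mu>"
  have inv: "inverse (emeasure \<mu> (space \<mu>)) = ennreal (1 / M)"
    using M by (simp add: inverse_ennreal inverse_eq_divide)
  have \<nu>P: "prob_space \<nu>"
  proof
    have "emeasure \<nu> (space \<nu>) = ennreal (1/M) * ennreal M"
      unfolding \<nu>_def using M inv by (simp add: space_scale_measure)
    also have "\<dots> = 1" using M by (simp add: ennreal_mult[symmetric])
    finally show "emeasure \<nu> (space \<nu>) = 1" .
  qed
  show ?thesis
    unfolding poisson_process_def \<nu>_def[symmetric]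
    by (intro prob_space_pair prob_space_PiM \<nu>P prob_space_measure_pmf)
qed

lemma poisson_prod_meas:
  fixes \<mu> :: "'a measure" and H :: "'a \<Rightarrow> ennreal"
  assumes H[measurable]: "H \<in> borel_measurable \<mu>"
  shows "(\<lambda>\<Psi>. \<Prod>j<fst \<Psi>. H (snd \<Psi> j)) \<in> borel_measurable (poisson_process \<mu>)"
  unfolding poisson_process_def
proof (rule measurable_compose_countable[where f = "\<lambda>n \<Psi>. \<Prod>j<n. H (snd \<Psi> j)" and g = fst])
  show "fst \<in> measurable (measure_pmf (poisson_pmf (measure \<mu> (space \<mu>))) \<Otimes>\<^sub>M
      PiM UNIV (\<lambda>_. scale_measure (inverse (emeasure \<mu> (space \<mu>))) \<mu>)) (count_space UNIV)"
    by (rule measurable_fst'') simp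
qed measurable

lemma nn_integral_pair_times:
  fixes M :: "'a measure" and N :: "'b measure"
  assumes "prob_space M" "prob_space N"
    and [measurable]: "f \<in> borel_measurable M" "h \<in> borel_measurable N"
  shows "(\<integral>\<^sup>+p. f (fst p) * h (snd p) \<partial>(M \<Otimes>\<^sub>M N)) = (\<integral>\<^sup>+a. f a \<partial>M) * (\<integral>\<^sup>+b. h b \<partial>N)"
proof -
  interpret M: prob_space M by fact
  interpret N: prob_space N by fact
  interpret pair_prob_space M N ..
  have "(\<integral>\<^sup>+p. f (fst p) * h (snd p) \<partial>(M \<Otimes>\<^sub>M N)) = (\<integral>\<^sup>+a. (\<integral>\<^sup>+b. f a * h b \<partial>N) \<partial>M)"
    by (subst N.nn_integral_fst[symmetric]) auto
  also have "\<dots> = (\<integral>\<^sup>+a. f a * (\<integral>\<^sup>+b. h b \<partial>N) \<partial>M)"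
    by (intro nn_integral_cong nn_integral_cmult) auto
  also have "\<dots> = (\<integral>\<^sup>+a. f a \<partial>M) * (\<integral>\<^sup>+b. h b \<partial>N)"
    by (rule nn_integral_multc) auto
  finally show ?thesis .
qed

definition lamc :: "(real \<Rightarrow> real^'p::finite \<Rightarrow> real^'m::finite \<Rightarrow> real) \<Rightarrow> real^'p \<Rightarrow> real \<Rightarrow> real \<Rightarrow> real \<Rightarrow> real \<Rightarrow> real" where
  "lamc g x y \<rho> \<phi> t = \<phi> * t powr (\<rho> - 1) / Zc g x y t"

lemma powr_int:
  assumes y: "0 < y" and \<rho>: "0 < \<rho>"
  shows "(\<integral>\<^sup>+t. ennreal (t powr (\<rho> - 1)) * indicator {0..y} t \<partial>lborel) = ennreal (y powr \<rho> / \<rho>)"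
proof -
  have "((\<lambda>t. t powr (\<rho> - 1)) has_integral (y powr (\<rho> - 1 + 1) / (\<rho> - 1 + 1))) {0..y}"
    using y \<rho> by (intro has_integral_powr_from_0) auto
  then show ?thesis by (subst nn_integral_has_integral_lebesgue') auto
qed

lemma density_cong_space:
  assumes "\<And>x. x \<in> space M \<Longrightarrow> f x = f' x"
  shows "density M f = density M f'"
  unfolding density_def
  by (intro arg_cong[where f="measure_of (space M) (sets M)"] ext nn_integral_cong) (simp add: assms)

lemma meas_pair_borel:
  assumes "H \<in> borel_measurable (borel :: (real \<times> real) measure)"
  shows "H \<in> borel_measurable (lborel \<Otimes>\<^sub>M (lborel :: real measure))"
  using assms by (simp add: lborel_prod)

context
  fixes g :: "real \<Rightarrow> real^'p::finite \<Rightarrow> real^'m::finite \<Rightarrow> real" and x :: "real^'p" and y :: real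
    and \<rho> \<phi> :: real
  assumes y: "0 < y" and cont: "continuous_on ({0..y} \<times> UNIV) (\<lambda>(t, \<theta>'). g t x \<theta>')"
    and \<rho>: "0 < \<rho>" and \<phi>: "0 < \<phi>"
begin

lemma Zc_clamp: "Zc g x y t = Zc g x y (max 0 (min y t))"
  unfolding Zc_def clampg_def using y by (simp add: max_def min_def)

lemma Zc_lower_all: "\<exists>c>0. \<forall>t. c \<le> Zc g x y t"
proof -
  obtain c where c: "c > 0" "\<And>t. t \<in> {0..y} \<Longrightarrow> c \<le> Zc g x y t"
    using Zc_lower[where g=g and x=x and y=y, OF y cont] by blast
  have "c \<le> Zc g x y t" for t
    using c(2)[of "max 0 (min y t)"] y by (simp add: Zc_clamp[of t])
  with c(1) show ?thesis by blast
qed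

lemma lam_eq: "t \<in> {0..y} \<Longrightarrow> cov_hazard g \<rho> t x \<phi> = lamc g x y \<rho> \<phi> t"
  unfolding cov_hazard_def base_hazard_def lamc_def by (simp add: Z_eq_Zc)

lemma lamc_meas[measurable]: "lamc g x y \<rho> \<phi> \<in> borel_measurable borel"
  unfolding lamc_def[abs_def] using Zc_meas[where g=g and x=x and y=y, OF y cont] by measurable

lemma Zc_pos: "0 < Zc g x y t"
  using Zc_lower_all by (auto intro: less_le_trans)

lemma lamc_nonneg: "0 \<le> lamc g x y \<rho> \<phi> t"
  unfolding lamc_def using Zc_pos \<phi> by (auto intro!: divide_nonneg_pos)

lemma lamc_lower: "\<phi> * t powr (\<rho> - 1) \<le> lamc g x y \<rho> \<phi> t"
proof -
  have "\<phi> * t powr (\<rho> - 1) / 1 \<le> \<phi> * t powr (\<rho> - 1) / Zc g x y t"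
    using Zc_pos Zc_le1[where g=g and x=x and y=y, OF y cont] \<phi> by (intro divide_left_mono) auto
  then show ?thesis unfolding lamc_def by simp
qed

lemma lamc_upper: "\<exists>C>0. \<forall>t. lamc g x y \<rho> \<phi> t \<le> C * t powr (\<rho> - 1)"
proof -
  obtain c where c: "c > 0" "\<And>t. c \<le> Zc g x y t" using Zc_lower_all by blast
  have "lamc g x y \<rho> \<phi> t \<le> \<phi> / c * t powr (\<rho> - 1)" for t
  proof -
    have "\<phi> * t powr (\<rho> - 1) / Zc g x y t \<le> \<phi> * t powr (\<rho> - 1) / c"
      using c \<phi> by (intro divide_left_mono) (auto intro: mult_pos_pos less_le_trans)
    then show ?thesis unfolding lamc_def by simp
  qed
  with c \<phi> show ?thesis by (intro exI[of _ "\<phi> / c"]) auto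
qed

definition Mr where "Mr = (\<integral>t. indicator {0..y} t * lamc g x y \<rho> \<phi> t \<partial>lborel)"

lemma lamc_nn_fin: "(\<integral>\<^sup>+t. ennreal (lamc g x y \<rho> \<phi> t) * indicator {0..y} t \<partial>lborel) < \<infinity>"
proof -
  obtain C where C: "C > 0" "\<And>t. lamc g x y \<rho> \<phi> t \<le> C * t powr (\<rho> - 1)" using lamc_upper by blast
  have "(\<integral>\<^sup>+t. ennreal (lamc g x y \<rho> \<phi> t) * indicator {0..y} t \<partial>lborel)
     \<le> (\<integral>\<^sup>+t. ennreal C * (ennreal (t powr (\<rho> - 1)) * indicator {0..y} t) \<partial>lborel)"
    using C by (intro nn_integral_mono) (auto simp: ennreal_mult[symmetric] indicator_def intro!: ennreal_leI)
  also have "\<dots> = ennreal C * ennreal (y powr \<rho> / \<rho>)"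
    using y \<rho> by (subst nn_integral_cmult) (auto simp: powr_int)
  also have "\<dots> < \<infinity>" by (simp add: ennreal_mult_less_top)
  finally show ?thesis .
qed

lemma lamc_integrable: "integrable lborel (\<lambda>t. indicator {0..y} t * lamc g x y \<rho> \<phi> t)"
proof (rule integrableI_bounded)
  have "(\<integral>\<^sup>+t. ennreal (norm (indicator {0..y} t * lamc g x y \<rho> \<phi> t)) \<partial>lborel)
      = (\<integral>\<^sup>+t. ennreal (lamc g x y \<rho> \<phi> t) * indicator {0..y} t \<partial>lborel)"
    using lamc_nonneg by (intro nn_integral_cong) (auto simp: indicator_def)
  then show "(\<integral>\<^sup>+t. ennreal (norm (indicator {0..y} t * lamc g x y \<rho> \<phi> t)) \<partial>lborel) < \<infinity>"
    using lamc_nn_fin by simp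
qed measurable

lemma Mr_nn: "(\<integral>\<^sup>+t. ennreal (lamc g x y \<rho> \<phi> t) * indicator {0..y} t \<partial>lborel) = ennreal Mr"
proof -
  have "(\<integral>\<^sup>+t. ennreal (lamc g x y \<rho> \<phi> t) * indicator {0..y} t \<partial>lborel)
      = (\<integral>\<^sup>+t. ennreal (indicator {0..y} t * lamc g x y \<rho> \<phi> t) \<partial>lborel)"
    by (intro nn_integral_cong) (auto simp: indicator_def)
  also have "\<dots> = ennreal Mr"
    unfolding Mr_def using lamc_nonneg
    by (intro nn_integral_eq_integral lamc_integrable) auto
  finally show ?thesis .
qed

lemma Mr_pos: "0 < Mr"
proof -
  have "ennreal (\<phi> * (y powr \<rho> / \<rho>)) = ennreal \<phi> * (\<integral>\<^sup>+t. ennreal (t powr (\<rho> - 1)) * indicator {0..y} t \<partial>lborel)"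
    using y \<rho> \<phi> by (simp only: powr_int[OF y \<rho>], subst ennreal_mult) auto
  also have "\<dots> = (\<integral>\<^sup>+t. ennreal \<phi> * (ennreal (t powr (\<rho> - 1)) * indicator {0..y} t) \<partial>lborel)"
    by (subst nn_integral_cmult) auto
  also have "\<dots> \<le> (\<integral>\<^sup>+t. ennreal (lamc g x y \<rho> \<phi> t) * indicator {0..y} t \<partial>lborel)"
    using \<phi> lamc_lower by (intro nn_integral_mono) (auto simp: ennreal_mult[symmetric] indicator_def intro!: ennreal_leI)
  also have "\<dots> = ennreal Mr" by (rule Mr_nn)
  finally have "ennreal (\<phi> * (y powr \<rho> / \<rho>)) \<le> ennreal Mr" .
  moreover have "0 < \<phi> * (y powr \<rho> / \<rho>)" using y \<rho> \<phi> by simp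
  ultimately show ?thesis
    by (metis ennreal_le_iff2 ennreal_less_zero_iff le_less_trans not_le)
qed

abbreviation \<Omega> where "\<Omega> \<equiv> {0..y} \<times> ({0..} :: real set)"

lemma mi_eq: "marked_intensity g \<rho> y x \<phi> =
  density (restrict_space lborel \<Omega>) (\<lambda>p. ennreal (lamc g x y \<rho> \<phi> (fst p)) * PG_density 1 0 (snd p))"
  unfolding marked_intensity_def
  by (intro density_cong_space) (auto simp: space_restrict_space lam_eq)

lemma mi_int:
  assumes H[measurable]: "H \<in> borel_measurable (borel :: (real \<times> real) measure)"
  shows "(\<integral>\<^sup>+p. H p \<partial>marked_intensity g \<rho> y x \<phi>)
    = (\<integral>\<^sup>+t. ennreal (lamc g x y \<rho> \<phi> t) * indicator {0..y} t * (\<integral>\<^sup>+\<omega>. H (t, \<omega>) \<partial>PG 1 0) \<partial>lborel)"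
proof -
  have Hp[measurable]: "H \<in> borel_measurable (lborel \<Otimes>\<^sub>M (lborel :: real measure))"
    by (rule meas_pair_borel[OF H])
  have Hl[measurable]: "H \<in> borel_measurable (lborel :: (real \<times> real) measure)"
    using H by simp
  have Os[measurable]: "\<Omega> \<in> sets (lborel :: (real \<times> real) measure)"
    by (simp, intro borel_closed closed_Times) auto
  define f where "f p = ennreal (lamc g x y \<rho> \<phi> (fst p)) * PG_density 1 0 (snd p)" for p :: "real \<times> real"
  have fp: "f \<in> borel_measurable (lborel \<Otimes>\<^sub>M (lborel :: real measure))"
    unfolding f_def by measurable
  have f[measurable]: "f \<in> borel_measurable (lborel :: (real \<times> real) measure)"
    using fp by (simp add: lborel_prod)
  have "(\<integral>\<^sup>+p. H p \<partial>marked_intensity g \<rho> y x \<phi>) = (\<integral>\<^sup>+p. H p \<partial>density (restrict_space lborel \<Omega>) f)"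
    unfolding mi_eq f_def ..
  also have "\<dots> = (\<integral>\<^sup>+p. f p * H p \<partial>restrict_space lborel \<Omega>)"
    by (intro nn_integral_density measurable_restrict_space1 f Hl)
  also have "\<dots> = (\<integral>\<^sup>+p. f p * H p * indicator \<Omega> p \<partial>lborel)"
    by (subst nn_integral_restrict_space) (use Os in auto)
  also have "\<dots> = (\<integral>\<^sup>+p. f p * H p * indicator \<Omega> p \<partial>(lborel \<Otimes>\<^sub>M lborel))"
    by (simp only: lborel_prod)
  also have "\<dots> = (\<integral>\<^sup>+t. (\<integral>\<^sup>+\<omega>. f (t, \<omega>) * H (t, \<omega>) * indicator \<Omega> (t, \<omega>) \<partial>lborel) \<partial>lborel)"
    by (subst lborel.nn_integral_fst[symmetric]) (auto simp: f_def)
  also have "\<dots> = (\<integral>\<^sup>+t. ennreal (lamc g x y \<rho> \<phi> t) * indicator {0..y} t * (\<integral>\<^sup>+\<omega>. H (t, \<omega>) \<partial>PG 1 0) \<partial>lborel)"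
  proof (intro nn_integral_cong)
    fix t :: real
    have "(\<integral>\<^sup>+\<omega>. f (t, \<omega>) * H (t, \<omega>) * indicator \<Omega> (t, \<omega>) \<partial>lborel)
        = (\<integral>\<^sup>+\<omega>. (ennreal (lamc g x y \<rho> \<phi> t) * indicator {0..y} t) * (PG_density 1 0 \<omega> * (indicator {0..} \<omega> * H (t, \<omega>))) \<partial>lborel)"
      by (intro nn_integral_cong) (auto simp: f_def indicator_def ac_simps)
    also have "\<dots> = (ennreal (lamc g x y \<rho> \<phi> t) * indicator {0..y} t) * (\<integral>\<^sup>+\<omega>. PG_density 1 0 \<omega> * (indicator {0..} \<omega> * H (t, \<omega>)) \<partial>lborel)"
      by (rule nn_integral_cmult) measurable
    also have "(\<integral>\<^sup>+\<omega>. PG_density 1 0 \<omega> * (indicator {0..} \<omega> * H (t, \<omega>)) \<partial>lborel) = (\<integral>\<^sup>+\<omega>. indicator {0..} \<omega> * H (t, \<omega>) \<partial>PG 1 0)"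
      by (rule PG_density_int[symmetric]) measurable
    also have "\<dots> = (\<integral>\<^sup>+\<omega>. H (t, \<omega>) \<partial>PG 1 0)"
      by (intro nn_integral_cong_AE) (use PG_AE_nonneg in \<open>auto elim!: eventually_mono\<close>)
    finally show "(\<integral>\<^sup>+\<omega>. f (t, \<omega>) * H (t, \<omega>) * indicator \<Omega> (t, \<omega>) \<partial>lborel) = ennreal (lamc g x y \<rho> \<phi> t) * indicator {0..y} t * (\<integral>\<^sup>+\<omega>. H (t, \<omega>) \<partial>PG 1 0)" .
  qed
  finally show ?thesis .
qed

lemma sigmoid_neg: "sigmoid (- z) = 1 - sigmoid z"
proof -
  have "1 + exp z \<noteq> 0" using exp_gt_zero[of z] by linarith
  then show ?thesis unfolding sigmoid_def
    by (simp add: field_simps exp_minus add_divide_distrib[symmetric])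
qed

definition Hth where "Hth \<theta> p = ennreal (exp (fPG (snd p) (- clampg g x y (fst p) \<theta>)))"

lemma Hth_meas[measurable]: "Hth \<theta> \<in> borel_measurable (borel :: (real \<times> real) measure)"
proof -
  have c0: "continuous_on UNIV (\<lambda>p::real\<times>real. (fst p, \<theta>))"
    by (intro continuous_intros)
  have c1: "continuous_on UNIV (\<lambda>p::real\<times>real. clampg g x y (fst p) \<theta>)"
    using continuous_on_compose2[OF clampg_cont'[where g=g and x=x and y=y, OF y cont] c0] by simp
  have "continuous_on UNIV (\<lambda>p::real\<times>real. exp ((- clampg g x y (fst p) \<theta>) / 2 - (- clampg g x y (fst p) \<theta>)\<^sup>2 / 2 * snd p - ln 2))"
    by (intro continuous_intros c1) auto
  then have "continuous_on UNIV (\<lambda>p::real\<times>real. exp (fPG (snd p) (- clampg g x y (fst p) \<theta>)))"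
    unfolding fPG_def by simp
  then have "(\<lambda>p::real\<times>real. exp (fPG (snd p) (- clampg g x y (fst p) \<theta>))) \<in> borel_measurable borel"
    by (rule borel_measurable_continuous_onI)
  then show ?thesis unfolding Hth_def[abs_def] by measurable
qed

definition Ir where "Ir \<theta> = (\<integral>t. indicator {0..y} t * lamc g x y \<rho> \<phi> t * sigmoid (- clampg g x y t \<theta>) \<partial>lborel)"

lemma clampg_t_meas[measurable]: "(\<lambda>t. clampg g x y t \<theta>) \<in> borel_measurable borel"
proof -
  have "continuous_on UNIV (\<lambda>t. (\<lambda>p. clampg g x y (fst p) (snd p)) (t, \<theta>))"
    by (rule continuous_on_compose2[OF clampg_cont'[where g=g and x=x and y=y, OF y cont]]) (auto intro!: continuous_intros)
  then show ?thesis by (simp add: borel_measurable_continuous_onI)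
qed

lemma lamc_sig_integrable: "integrable lborel (\<lambda>t. indicator {0..y} t * lamc g x y \<rho> \<phi> t * sigmoid (s * clampg g x y t \<theta>))"
proof (rule Bochner_Integration.integrable_bound[OF lamc_integrable])
  show "AE t in lborel. norm (indicator {0..y} t * lamc g x y \<rho> \<phi> t * sigmoid (s * clampg g x y t \<theta>))
      \<le> norm (indicator {0..y} t * lamc g x y \<rho> \<phi> t)"
  proof (intro AE_I2)
    fix t
    have "indicator {0..y} t * lamc g x y \<rho> \<phi> t * sigmoid (s * clampg g x y t \<theta>) \<le> indicator {0..y} t * lamc g x y \<rho> \<phi> t"
      by (intro mult_right_le_one_le) (auto simp: lamc_nonneg sigmoid_le1 less_imp_le[OF sigmoid_pos])
    moreover have "0 \<le> indicator {0..y} t * lamc g x y \<rho> \<phi> t * sigmoid (s * clampg g x y t \<theta>)"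
      by (auto simp: lamc_nonneg less_imp_le[OF sigmoid_pos])
    ultimately show "norm (indicator {0..y} t * lamc g x y \<rho> \<phi> t * sigmoid (s * clampg g x y t \<theta>))
      \<le> norm (indicator {0..y} t * lamc g x y \<rho> \<phi> t)" by simp
  qed
qed measurable

lemma Hth_int: "(\<integral>\<^sup>+p. Hth \<theta> p \<partial>marked_intensity g \<rho> y x \<phi>) = ennreal (Ir \<theta>)"
proof -
  have "(\<integral>\<^sup>+p. Hth \<theta> p \<partial>marked_intensity g \<rho> y x \<phi>)
     = (\<integral>\<^sup>+t. ennreal (lamc g x y \<rho> \<phi> t) * indicator {0..y} t * (\<integral>\<^sup>+\<omega>. Hth \<theta> (t, \<omega>) \<partial>PG 1 0) \<partial>lborel)"
    by (rule mi_int) measurable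
  also have "\<dots> = (\<integral>\<^sup>+t. ennreal (indicator {0..y} t * lamc g x y \<rho> \<phi> t * sigmoid (- clampg g x y t \<theta>)) \<partial>lborel)"
    by (intro nn_integral_cong)
       (auto simp: Hth_def PG_fPG ennreal_mult[symmetric] lamc_nonneg less_imp_le[OF sigmoid_pos] indicator_def)
  also have "\<dots> = ennreal (Ir \<theta>)"
    unfolding Ir_def using lamc_sig_integrable[of "-1" \<theta>]
    by (intro nn_integral_eq_integral) (auto simp: lamc_nonneg less_imp_le[OF sigmoid_pos] indicator_def)
  finally show ?thesis .
qed

lemma Ir_nonneg: "0 \<le> Ir \<theta>"
  unfolding Ir_def by (intro integral_nonneg_AE AE_I2) (auto simp: lamc_nonneg less_imp_le[OF sigmoid_pos] indicator_def)

lemma mi_space: "space (marked_intensity g \<rho> y x \<phi>) = \<Omega>"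
  unfolding marked_intensity_def by (simp add: space_restrict_space)

lemma mi_total: "emeasure (marked_intensity g \<rho> y x \<phi>) (space (marked_intensity g \<rho> y x \<phi>)) = ennreal Mr"
proof -
  interpret PGP: prob_space "PG 1 0" by (rule PG_prob)
  have "emeasure (marked_intensity g \<rho> y x \<phi>) (space (marked_intensity g \<rho> y x \<phi>))
      = (\<integral>\<^sup>+p. 1 \<partial>marked_intensity g \<rho> y x \<phi>)" by simp
  also have "\<dots> = (\<integral>\<^sup>+t. ennreal (lamc g x y \<rho> \<phi> t) * indicator {0..y} t * (\<integral>\<^sup>+\<omega>. 1 \<partial>PG 1 0) \<partial>lborel)"
    by (rule mi_int) simp
  also have "\<dots> = ennreal Mr"
    using PGP.emeasure_space_1 by (simp add: Mr_nn)
  finally show ?thesis .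
qed

lemma LINT_eq: "(LINT t:{0..y}|lborel. cov_hazard g \<rho> t x \<phi> * sigmoid (g t x \<theta>))
   = (\<integral>t. indicator {0..y} t * lamc g x y \<rho> \<phi> t * sigmoid (clampg g x y t \<theta>) \<partial>lborel)"
  unfolding set_lebesgue_integral_def
  by (intro Bochner_Integration.integral_cong refl) (auto simp: indicator_def lam_eq clampg_eq)

lemma Ir_Mr: "Ir \<theta> - Mr = - (LINT t:{0..y}|lborel. cov_hazard g \<rho> t x \<phi> * sigmoid (g t x \<theta>))"
proof -
  have "Ir \<theta> = (\<integral>t. indicator {0..y} t * lamc g x y \<rho> \<phi> t - indicator {0..y} t * lamc g x y \<rho> \<phi> t * sigmoid (clampg g x y t \<theta>) \<partial>lborel)"
    unfolding Ir_def by (intro Bochner_Integration.integral_cong refl) (simp add: sigmoid_neg algebra_simps)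
  also have "\<dots> = Mr - (\<integral>t. indicator {0..y} t * lamc g x y \<rho> \<phi> t * sigmoid (clampg g x y t \<theta>) \<partial>lborel)"
    unfolding Mr_def using lamc_integrable lamc_sig_integrable[of 1 \<theta>] by (subst Bochner_Integration.integral_diff) auto
  finally show ?thesis by (simp add: LINT_eq)
qed

lemma aug_poisson:
  "(\<integral>\<^sup>+\<Psi>. ennreal (\<Prod>j<fst \<Psi>. exp (fPG (snd (snd \<Psi> j)) (- g (fst (snd \<Psi> j)) x \<theta>))) \<partial>poisson_process (marked_intensity g \<rho> y x \<phi>))
   = ennreal (exp (- (LINT t:{0..y}|lborel. cov_hazard g \<rho> t x \<phi> * sigmoid (g t x \<theta>))))"
proof -
  let ?\<mu> = "marked_intensity g \<rho> y x \<phi>"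
  have "(\<integral>\<^sup>+\<Psi>. ennreal (\<Prod>j<fst \<Psi>. exp (fPG (snd (snd \<Psi> j)) (- g (fst (snd \<Psi> j)) x \<theta>))) \<partial>poisson_process ?\<mu>)
      = (\<integral>\<^sup>+\<Psi>. (\<Prod>j<fst \<Psi>. Hth \<theta> (snd \<Psi> j)) \<partial>poisson_process ?\<mu>)"
  proof (intro nn_integral_cong)
    fix \<Psi> assume "\<Psi> \<in> space (poisson_process ?\<mu>)"
    then have "snd \<Psi> j \<in> \<Omega>" for j
      by (auto simp: poisson_process_def space_pair_measure space_PiM space_scale_measure mi_space PiE_iff)
    then show "ennreal (\<Prod>j<fst \<Psi>. exp (fPG (snd (snd \<Psi> j)) (- g (fst (snd \<Psi> j)) x \<theta>))) = (\<Prod>j<fst \<Psi>. Hth \<theta> (snd \<Psi> j))"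
      by (auto simp: Hth_def prod_ennreal clampg_eq mem_Times_iff intro!: prod.cong)
  qed
  also have "\<dots> = ennreal (exp (Ir \<theta> - Mr))"
  proof (rule poisson_functional[OF mi_total Mr_pos _ Hth_int Ir_nonneg])
    show "Hth \<theta> \<in> borel_measurable ?\<mu>"
      unfolding marked_intensity_def
      by (simp, intro measurable_restrict_space1) (simp add: Hth_meas)
  qed
  also have "\<dots> = ennreal (exp (- (LINT t:{0..y}|lborel. cov_hazard g \<rho> t x \<phi> * sigmoid (g t x \<theta>))))"
    by (simp add: Ir_Mr)
  finally show ?thesis .
qed

end

theorem theorem1:
  fixes N :: nat and ys :: "nat \<Rightarrow> real" and \<delta>s :: "nat \<Rightarrow> nat"
    and xs :: "nat \<Rightarrow> real ^ 'p::finite"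
    and g :: "real \<Rightarrow> real ^ 'p \<Rightarrow> real ^ 'm::finite \<Rightarrow> real"
    and \<rho> \<phi> :: real and \<theta> :: "real ^ 'm" and i :: nat
  assumes ys_pos: "\<And>k. k \<in> {1..N} \<Longrightarrow> ys k > 0"
    and \<delta>s_bin: "\<And>k. k \<in> {1..N} \<Longrightarrow> \<delta>s k \<in> {0, 1}"
    and \<rho>_pos: "\<rho> > 0"
    and i: "i \<in> {1..N}"
    and \<phi>_pos: "\<phi> > 0"
    and cont: "continuous_on ({0..ys i} \<times> UNIV) (\<lambda>(t, \<theta>'). g t (xs i) \<theta>')"
  shows "ennreal (likelihood g \<rho> (ys i) (\<delta>s i) (xs i) \<phi> \<theta>) =
    (\<integral>\<^sup>+ (\<omega>, \<Psi>). ennreal (aug_likelihood g \<rho> (ys i) (\<delta>s i) (xs i) \<phi> \<theta> \<omega> \<Psi>)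
        \<partial>(PG 1 0 \<Otimes>\<^sub>M poisson_process (marked_intensity g \<rho> (ys i) (xs i) \<phi>)))"
proof -
  have y: "0 < ys i" using ys_pos i by auto
  have \<delta>: "\<delta>s i \<in> {0, 1}" using \<delta>s_bin i by auto
  let ?\<mu> = "marked_intensity g \<rho> (ys i) (xs i) \<phi>"
  let ?PP = "poisson_process ?\<mu>"
  let ?L = "LINT t:{0..ys i}|lborel. cov_hazard g \<rho> t (xs i) \<phi> * sigmoid (g t (xs i) \<theta>)"
  have PPp: "prob_space ?PP"
    by (rule poisson_process_prob[OF mi_total[where g=g and x="xs i" and y="ys i", OF y cont \<rho>_pos \<phi>_pos]
          Mr_pos[where g=g and x="xs i" and y="ys i", OF y cont \<rho>_pos \<phi>_pos]])
  have PGp: "prob_space (PG 1 0)" by (rule PG_prob)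
  define lamy where "lamy = cov_hazard g \<rho> (ys i) (xs i) \<phi>"
  have lamy_nn: "0 \<le> lamy"
    unfolding lamy_def using y
    by (subst lam_eq[where g=g and x="xs i" and y="ys i", OF y cont \<rho>_pos \<phi>_pos])
       (auto intro: lamc_nonneg[where g=g and x="xs i" and y="ys i", OF y cont \<rho>_pos \<phi>_pos])
  define z where "z = g (ys i) (xs i) \<theta>"
  define A where "A \<omega> = ennreal ((lamy * exp (fPG \<omega> z)) ^ \<delta>s i)" for \<omega>
  define h where "h \<Psi> = (\<Prod>j<fst \<Psi>. Hth g (xs i) (ys i) \<theta> (snd \<Psi> j))" for \<Psi> :: "nat \<times> (nat \<Rightarrow> real \<times> real)"
  have A_meas[measurable]: "A \<in> borel_measurable (PG 1 0)"
    unfolding A_def fPG_def by measurable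
  have H_meas: "Hth g (xs i) (ys i) \<theta> \<in> borel_measurable ?\<mu>"
    unfolding marked_intensity_def
    by (simp, intro measurable_restrict_space1)
       (simp add: Hth_meas[where g=g and x="xs i" and y="ys i", OF y cont \<rho>_pos \<phi>_pos])
  have h_meas[measurable]: "h \<in> borel_measurable ?PP"
    unfolding h_def by (rule poisson_prod_meas[OF H_meas])
  have h_eq: "ennreal (\<Prod>j<fst \<Psi>. exp (fPG (snd (snd \<Psi> j)) (- g (fst (snd \<Psi> j)) (xs i) \<theta>))) = h \<Psi>"
    if "\<Psi> \<in> space ?PP" for \<Psi>
  proof -
    from that have in\<Omega>: "snd \<Psi> j \<in> {0..ys i} \<times> {0..}" for j
      by (auto simp: poisson_process_def space_pair_measure space_PiM space_scale_measure
          mi_space[where g=g and x="xs i" and y="ys i", OF y cont \<rho>_pos \<phi>_pos] PiE_iff)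
    have "Hth g (xs i) (ys i) \<theta> (snd \<Psi> j) = ennreal (exp (fPG (snd (snd \<Psi> j)) (- g (fst (snd \<Psi> j)) (xs i) \<theta>)))" for j
      unfolding Hth_def[where g=g and x="xs i" and y="ys i", OF y cont \<rho>_pos \<phi>_pos] using in\<Omega>[of j] by (subst clampg_eq) (auto simp: mem_Times_iff)
    then show ?thesis
      unfolding h_def by (simp add: prod_ennreal)
  qed
  have int_h: "(\<integral>\<^sup>+\<Psi>. h \<Psi> \<partial>?PP) = ennreal (exp (- ?L))"
  proof -
    have "(\<integral>\<^sup>+\<Psi>. h \<Psi> \<partial>?PP) = (\<integral>\<^sup>+\<Psi>. ennreal (\<Prod>j<fst \<Psi>. exp (fPG (snd (snd \<Psi> j)) (- g (fst (snd \<Psi> j)) (xs i) \<theta>))) \<partial>?PP)"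
      by (intro nn_integral_cong) (simp add: h_eq)
    also have "\<dots> = ennreal (exp (- ?L))"
      by (rule aug_poisson[where g=g and x="xs i" and y="ys i", OF y cont \<rho>_pos \<phi>_pos])
    finally show ?thesis .
  qed
  have int_A: "(\<integral>\<^sup>+\<omega>. A \<omega> \<partial>PG 1 0) = ennreal ((lamy * sigmoid z) ^ \<delta>s i)"
  proof (cases "\<delta>s i = 0")
    case True
    interpret prob_space "PG 1 0" by (rule PG_prob)
    show ?thesis using True emeasure_space_1 by (simp add: A_def)
  next
    case False
    with \<delta> have d1: "\<delta>s i = 1" by auto
    have "(\<integral>\<^sup>+\<omega>. A \<omega> \<partial>PG 1 0) = (\<integral>\<^sup>+\<omega>. ennreal lamy * ennreal (exp (fPG \<omega> z)) \<partial>PG 1 0)"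
      unfolding A_def d1 using lamy_nn by (intro nn_integral_cong) (simp add: ennreal_mult)
    also have "\<dots> = ennreal lamy * (\<integral>\<^sup>+\<omega>. ennreal (exp (fPG \<omega> z)) \<partial>PG 1 0)"
      by (rule nn_integral_cmult) (unfold fPG_def, measurable)
    also have "\<dots> = ennreal lamy * ennreal (sigmoid z)" by (simp only: PG_fPG)
    also have "\<dots> = ennreal ((lamy * sigmoid z) ^ \<delta>s i)"
      using lamy_nn d1 by (simp add: ennreal_mult less_imp_le[OF sigmoid_pos])
    finally show ?thesis .
  qed
  have "(\<integral>\<^sup>+ (\<omega>, \<Psi>). ennreal (aug_likelihood g \<rho> (ys i) (\<delta>s i) (xs i) \<phi> \<theta> \<omega> \<Psi>) \<partial>(PG 1 0 \<Otimes>\<^sub>M ?PP))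
      = (\<integral>\<^sup>+p. A (fst p) * h (snd p) \<partial>(PG 1 0 \<Otimes>\<^sub>M ?PP))"
  proof (intro nn_integral_cong)
    fix p assume p: "p \<in> space (PG 1 0 \<Otimes>\<^sub>M ?PP)"
    then have sp: "snd p \<in> space ?PP" by (auto simp: space_pair_measure)
    have "ennreal (aug_likelihood g \<rho> (ys i) (\<delta>s i) (xs i) \<phi> \<theta> (fst p) (snd p))
        = A (fst p) * ennreal (\<Prod>j<fst (snd p). exp (fPG (snd (snd (snd p) j)) (- g (fst (snd (snd p) j)) (xs i) \<theta>)))"
      unfolding aug_likelihood_def A_def lamy_def[symmetric] z_def[symmetric]
      using lamy_nn by (subst ennreal_mult') auto
    also have "\<dots> = A (fst p) * h (snd p)" using h_eq[OF sp] by simp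
    finally show "(case p of (\<omega>, \<Psi>) \<Rightarrow> ennreal (aug_likelihood g \<rho> (ys i) (\<delta>s i) (xs i) \<phi> \<theta> \<omega> \<Psi>)) = A (fst p) * h (snd p)"
      by (simp add: split_beta)
  qed
  also have "\<dots> = (\<integral>\<^sup>+\<omega>. A \<omega> \<partial>PG 1 0) * (\<integral>\<^sup>+\<Psi>. h \<Psi> \<partial>?PP)"
    by (rule nn_integral_pair_times[OF PGp PPp A_meas h_meas])
  also have "\<dots> = ennreal ((lamy * sigmoid z) ^ \<delta>s i) * ennreal (exp (- ?L))"
    by (simp only: int_A int_h)
  also have "\<dots> = ennreal (likelihood g \<rho> (ys i) (\<delta>s i) (xs i) \<phi> \<theta>)"
    unfolding likelihood_def lamy_def[symmetric] z_def[symmetric]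
    using lamy_nn by (subst ennreal_mult) (auto intro!: zero_le_power mult_nonneg_nonneg less_imp_le[OF sigmoid_pos])
  finally show ?thesis by simp
qed

end
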